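(* Let $d\in\mathbb{N}$, let $w(k)>0$, $k\in\mathbb{Z}^d$, be weights with $\sum_{k\in\mathbb{Z}^d}w(k)^{-2}<\infty$, and let $S^0_{1,\infty}B(\mathbb{T}^d)$ be normed with respect to an admissible one-dimensional $\psi$, with $c_\psi$ as in the context. Then for all $n\in\mathbb{N}$ $$c_\psi^{-d}\,a_n\big(I_d:\mathcal{M}(\mathbb{T}^d)\to F_d(1/w)\big)\le a_n\big(I_d:S^0_{1,\infty}B(\mathbb{T}^d)\to F_d(1/w)\big)\le 2^d\,a_n\big(I_d:\mathcal{B}(\mathbb{T}^d)\to F_d(1/w)\big).$$
   Context: $\mathbb{T}^d=[0,2\pi)^d$ with the normalized Lebesgue measure; $\hat f(k)=(2\pi)^{-d}\int_{\mathbb{T}^d}f(x)e^{-ik\cdot x}dx$. Periodic distributions are identified with formal Fourier series $\sum_k\hat g(k)e^{ik\cdot x}$ with polynomially bounded coefficients. For weights $v(k)>0$, $F_d(v)$ is the Hilbert space of periodic distributions $g$ with $\|g|F_d(v)\|=(\sum_k v(k)^2|\hat g(k)|^2)^{1/2}<\infty$; $1/w$ is the weight $k\mapsto 1/w(k)$. $\mathcal{B}(\mathbb{T}^d)$: $g$ with $\|g|\mathcal{B}\|=\sup_k|\hat g(k)|<\infty$. $\mathcal{M}(\mathbb{T}^d)$: complex Borel measures with total variation norm, identified with distributions via $\hat\mu(k)=\int_{\mathbb{T}^d}e^{-ik\cdot x}d\mu(x)$. Admissible one-dimensional $\psi$: real-valued nonnegative $\psi\in C_0^\infty(\mathbb{R})$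 supported in $[-3/2,3/2]$, $\psi(\xi/2)-\psi(\xi)\ge0$, $\psi=1$ on $[-1,1]$; $\varphi_0=\psi$, $\varphi_j(\xi)=\psi(2^{-j}\xi)-\psi(2^{-j+1}\xi)$ ($j\ge1$); $c_\psi:=\max_{j\in\{0,1\}}\frac{1}{2\pi}\int_{\mathbb{R}}|\int_{\mathbb{R}}\varphi_j(\xi)e^{ix\xi}d\xi|dx$. $S^0_{1,\infty}B(\mathbb{T}^d)$: periodic distributions $g$ with $\|g|S^0_{1,\infty}B\|=\sup_{\ell\in\mathbb{N}_0^d}\|\sum_k\prod_{j=1}^d\varphi_{\ell_j}(k_j)\hat g(k)e^{ik\cdot x}|L_1(\mathbb{T}^d)\|<\infty$. $I_d$ denotes inclusion maps; $a_n(T)=\inf\{\|T-A\|:\operatorname{rank}A<n\}$. *)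

theory Defs
  imports "HOL-Analysis.Analysis"
begin

text \<open>Periodic distributions on T^d are identified with their Fourier coefficient
  families indexed by Z^d, here modelled as int^'d (d = CARD('d)).\<close>

type_synonym 'd pdist = "int ^ 'd \<Rightarrow> complex"

definition tempered :: "'d::finite pdist \<Rightarrow> bool" where
  "tempered g \<longleftrightarrow> (\<exists>C (N::nat). \<forall>k. norm (g k) \<le> C * (1 + (\<Sum>i\<in>UNIV. real_of_int \<bar>k $ i\<bar>)) ^ N)"

definition torus :: "(real ^ 'd::finite) set" where
  "torus = {x. \<forall>i. 0 \<le> x $ i \<and> x $ i < 2 * pi}"

definition kdot :: "int ^ 'd::finite \<Rightarrow> real ^ 'd \<Rightarrow> real" where
  "kdot k x = (\<Sum>i\<in>UNIV. real_of_int (k $ i) * x $ i)"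

type_synonym 'd dspace = "'d pdist set \<times> ('d pdist \<Rightarrow> real)"

text \<open>F_d(1/w): weight v(k) = 1/w(k).\<close>
definition Fspace :: "(int ^ 'd::finite \<Rightarrow> real) \<Rightarrow> 'd dspace" where
  "Fspace w = ({g. tempered g \<and> (\<lambda>k. (norm (g k))\<^sup>2 / (w k)\<^sup>2) summable_on UNIV},
               (\<lambda>g. sqrt (\<Sum>\<^sub>\<infinity>k. (norm (g k))\<^sup>2 / (w k)\<^sup>2)))"

definition Bspace :: "'d::finite dspace" where
  "Bspace = ({g. tempered g \<and> bdd_above (range (\<lambda>k. norm (g k)))},
             (\<lambda>g. SUP k. norm (g k)))"

text \<open>Complex Borel measures on T^d, represented by polar form h \<cdot> \<nu> with \<nu> a finite
  positive Borel measure concentrated on T^d and h \<in> L_1(\<nu>); the total variation is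
  \<integral>|h| d\<nu> (minimised over representations; equal to |\<mu>| for the polar decomposition).\<close>
definition meas_repr :: "'d::finite pdist \<Rightarrow> (real ^ 'd) measure \<Rightarrow> (real ^ 'd \<Rightarrow> complex) \<Rightarrow> bool" where
  "meas_repr g \<nu> h \<longleftrightarrow> sets \<nu> = sets borel \<and> finite_measure \<nu> \<and> emeasure \<nu> (UNIV - torus) = 0
     \<and> integrable \<nu> h \<and> (\<forall>k. g k = (\<integral>x. h x * cis (- kdot k x) \<partial>\<nu>))"

definition Mspace :: "'d::finite dspace" where
  "Mspace = ({g. \<exists>\<nu> h. meas_repr g \<nu> h},
             (\<lambda>g. Inf {(\<integral>x. norm (h x) \<partial>\<nu>) | \<nu> h. meas_repr g \<nu> h}))"

definition smooth :: "(real \<Rightarrow> real) \<Rightarrow> bool" where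
  "smooth f \<longleftrightarrow> (\<exists>D. D 0 = f \<and> (\<forall>n x. (D n has_real_derivative D (Suc n) x) (at x)))"

definition admissible :: "(real \<Rightarrow> real) \<Rightarrow> bool" where
  "admissible \<psi> \<longleftrightarrow> smooth \<psi> \<and> (\<forall>\<xi>. 0 \<le> \<psi> \<xi>) \<and> (\<forall>\<xi>. \<bar>\<xi>\<bar> > 3/2 \<longrightarrow> \<psi> \<xi> = 0)
     \<and> (\<forall>\<xi>. \<psi> (\<xi>/2) - \<psi> \<xi> \<ge> 0) \<and> (\<forall>\<xi>. \<bar>\<xi>\<bar> \<le> 1 \<longrightarrow> \<psi> \<xi> = 1)"

definition phi :: "(real \<Rightarrow> real) \<Rightarrow> nat \<Rightarrow> real \<Rightarrow> real" where
  "phi \<psi> j \<xi> = (if j = 0 then \<psi> \<xi> else \<psi> (\<xi> / 2 ^ j) - \<psi> (\<xi> / 2 ^ (j - 1)))"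

definition c_psi :: "(real \<Rightarrow> real) \<Rightarrow> real" where
  "c_psi \<psi> = Max ((\<lambda>j. 1 / (2 * pi) *
      (\<integral>x. norm (\<integral>\<xi>. complex_of_real (phi \<psi> j \<xi>) * cis (x * \<xi>) \<partial>lborel) \<partial>lborel)) ` {0, 1})"

text \<open>Dyadic block l of g: the trigonometric polynomial
  \<Sum>_k \<Prod>_j phi_{l_j}(k_j) g(k) e^{ik\<cdot>x} (the sum is over the box containing the support).\<close>
definition block :: "(real \<Rightarrow> real) \<Rightarrow> 'd::finite pdist \<Rightarrow> ('d \<Rightarrow> nat) \<Rightarrow> real ^ 'd \<Rightarrow> complex" where
  "block \<psi> g l x = (\<Sum>k\<in>{k. \<forall>j. \<bar>k $ j\<bar> \<le> 2 ^ (l j + 1)}.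
      complex_of_real (\<Prod>j\<in>UNIV. phi \<psi> (l j) (real_of_int (k $ j))) * g k * cis (kdot k x))"

definition L1norm :: "(real ^ 'd::finite \<Rightarrow> complex) \<Rightarrow> real" where
  "L1norm f = (1 / (2 * pi) ^ CARD('d)) * (\<integral>x\<in>torus. norm (f x) \<partial>lborel)"

definition Sspace :: "(real \<Rightarrow> real) \<Rightarrow> 'd::finite dspace" where
  "Sspace \<psi> = ({g. tempered g \<and> bdd_above (range (\<lambda>l. L1norm (block \<psi> g l)))},
               (\<lambda>g. SUP l. L1norm (block \<psi> g l)))"

definition clinear_on :: "'d::finite pdist set \<Rightarrow> ('d pdist \<Rightarrow> 'd pdist) \<Rightarrow> bool" where
  "clinear_on X A \<longleftrightarrow> (\<forall>f\<in>X. \<forall>g\<in>X. A (\<lambda>k. f k + g k) = (\<lambda>k. A f k + A g k))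
     \<and> (\<forall>f\<in>X. \<forall>c::complex. A (\<lambda>k. c * f k) = (\<lambda>k. c * A f k))"

definition cspan_fun :: "'d::finite pdist set \<Rightarrow> 'd pdist set" where
  "cspan_fun B = {(\<lambda>k. \<Sum>b\<in>B. c b * b k) | c. True}"

definition rank_lt :: "'d::finite pdist set \<Rightarrow> ('d pdist \<Rightarrow> 'd pdist) \<Rightarrow> nat \<Rightarrow> bool" where
  "rank_lt X A n \<longleftrightarrow> (\<exists>B. finite B \<and> card B < n \<and> A ` X \<subseteq> cspan_fun B)"

definition incl_diff_norm :: "'d::finite dspace \<Rightarrow> 'd dspace \<Rightarrow> ('d pdist \<Rightarrow> 'd pdist) \<Rightarrow> ereal" where
  "incl_diff_norm X Y A = (SUP g\<in>{g\<in>fst X. snd X g \<le> 1}. ereal (snd Y (\<lambda>k. g k - A g k)))"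

definition approx_num :: "nat \<Rightarrow> 'd::finite dspace \<Rightarrow> 'd dspace \<Rightarrow> ereal" where
  "approx_num n X Y = (INF A\<in>{A. clinear_on (fst X) A \<and> A ` fst X \<subseteq> fst Y \<and> rank_lt (fst X) A n}.
      incl_diff_norm X Y A)"

end

theory Submission
  imports Defs "HOL-Probability.Sinc_Integral"
begin

lemma integral_lborel_prod:
  fixes f :: "'a::euclidean_space \<Rightarrow> real \<Rightarrow> complex"
  assumes int: "\<And>b. b \<in> Basis \<Longrightarrow> integrable lborel (f b)"
  shows "(\<integral>x. (\<Prod>b\<in>Basis. f b (x \<bullet> b)) \<partial>(lborel::'a measure)) = (\<Prod>b\<in>Basis. \<integral>x. f b x \<partial>lborel)"
proof -
  interpret product_sigma_finite "\<lambda>_::'a. (lborel::real measure)" by standard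
  have meas: "(\<lambda>x. \<Prod>b\<in>Basis. f b (x \<bullet> b)) \<in> borel_measurable (borel::'a measure)"
    using int by (intro borel_measurable_prod) (auto dest: borel_measurable_integrable
        intro: measurable_compose[OF borel_measurable_inner[OF measurable_ident_sets measurable_const]])
  have "(\<integral>x. (\<Prod>b\<in>Basis. f b (x \<bullet> b)) \<partial>(lborel::'a measure))
     = (\<integral>y. (\<Prod>b\<in>Basis. f b ((\<Sum>b'\<in>Basis. y b' *\<^sub>R b') \<bullet> b)) \<partial>(\<Pi>\<^sub>M b\<in>Basis. lborel))"
    apply (subst lborel_eq)
    apply (subst integral_distr)
    using meas by auto
  also have "\<dots> = (\<integral>y. (\<Prod>b\<in>Basis. f b (y b)) \<partial>(\<Pi>\<^sub>M b\<in>Basis. lborel))"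
    by (intro Bochner_Integration.integral_cong refl prod.cong)
       (simp_all add: inner_sum_left inner_Basis if_distrib sum.delta cong: if_cong)
  also have "\<dots> = (\<Prod>b\<in>Basis. \<integral>x. f b x \<partial>lborel)"
    by (rule product_integral_prod) (auto intro: int)
  finally show ?thesis .
qed

lemma Basis_real_vec: "(Basis :: (real^'d::finite) set) = range (\<lambda>i. axis i 1)"
  by (auto simp: Basis_vec_def)

lemma inj_axis1: "inj (\<lambda>i::'d::finite. axis i (1::real))"
  by (auto simp: inj_def axis_eq_axis)

lemma prod_Basis_vec:
  "(\<Prod>b\<in>(Basis :: (real^'d::finite) set). F b) = (\<Prod>i\<in>UNIV. F (axis i 1))"
  unfolding Basis_real_vec by (subst prod.reindex[OF inj_axis1]) simp

definition ax_idx :: "real^'d::finite \<Rightarrow> 'd" where "ax_idx b = (THE i. b = axis i 1)"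

lemma ax_idx_axis[simp]: "ax_idx (axis i (1::real)) = i"
  unfolding ax_idx_def by (rule the_equality) (auto simp: axis_eq_axis)

lemma integral_lborel_vec_prod:
  fixes f :: "'d::finite \<Rightarrow> real \<Rightarrow> complex"
  assumes int: "\<And>i. integrable lborel (f i)"
  shows "(\<integral>x. (\<Prod>i\<in>UNIV. f i (x $ i)) \<partial>(lborel::(real^'d) measure)) = (\<Prod>i\<in>UNIV. \<integral>t. f i t \<partial>lborel)"
proof -
  have "(\<integral>x. (\<Prod>b\<in>Basis. f (ax_idx b) (x \<bullet> b)) \<partial>(lborel::(real^'d) measure))
      = (\<Prod>b\<in>Basis. \<integral>t. f (ax_idx b) t \<partial>lborel)"
    by (rule integral_lborel_prod) (use int in auto)
  then show ?thesis
    by (simp add: prod_Basis_vec cart_eq_inner_axis)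
qed

lemma nn_integral_lborel_vec_prod:
  fixes f :: "'d::finite \<Rightarrow> real \<Rightarrow> ennreal"
  assumes [measurable]: "\<And>i. f i \<in> borel_measurable borel"
  shows "(\<integral>\<^sup>+x. (\<Prod>i\<in>UNIV. f i (x $ i)) \<partial>(lborel::(real^'d) measure)) = (\<Prod>i\<in>UNIV. \<integral>\<^sup>+t. f i t \<partial>lborel)"
proof -
  have "(\<integral>\<^sup>+x. (\<Prod>b\<in>Basis. f (ax_idx b) (x \<bullet> b)) \<partial>(lborel::(real^'d) measure))
      = (\<Prod>b\<in>Basis. \<integral>\<^sup>+t. f (ax_idx b) t \<partial>lborel)"
    by (rule nn_integral_lborel_prod) auto
  then show ?thesis
    by (simp add: prod_Basis_vec cart_eq_inner_axis)
qed

lemma integrable_cont_supp: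
  fixes g :: "real \<Rightarrow> 'a::{banach,second_countable_topology}"
  assumes "continuous_on UNIV g" "\<And>\<xi>. R < \<bar>\<xi>\<bar> \<Longrightarrow> g \<xi> = 0"
  shows "integrable lborel g"
proof -
  have "set_integrable lborel {-R..R} g"
    by (rule borel_integrable_atLeastAtMost') (use assms(1) continuous_on_subset in blast)
  moreover have "(\<lambda>x. indicator {-R..R} x *\<^sub>R g x) = g"
    using assms(2) by (auto simp: fun_eq_iff indicator_def abs_le_iff)
  ultimately show ?thesis unfolding set_integrable_def by simp
qed

lemma sum_int_sym:
  "(\<Sum>j\<in>{-int n..int n}. f j) = f 0 + (\<Sum>m=1..n. f (int m) + f (- int m))"
proof (induction n)
  case 0 then show ?case by simp
next
  case (Suc n)
  have "{-int (Suc n)..int (Suc n)} = insert (int (Suc n)) (insert (- int (Suc n)) {-int n..int n})"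
    by auto
  then have "(\<Sum>j\<in>{-int (Suc n)..int (Suc n)}. f j) = f (int (Suc n)) + f (- int (Suc n)) + (\<Sum>j\<in>{-int n..int n}. f j)"
    by (simp add: add.assoc)
  then show ?case using Suc by (simp add: algebra_simps)
qed

definition Dk :: "nat \<Rightarrow> real \<Rightarrow> real" where
  "Dk n \<xi> = (\<Sum>j\<in>{-int n..int n}. cos (2 * pi * of_int j * \<xi>))"

lemma Dk_alt: "Dk n \<xi> = 1 + 2 * (\<Sum>m=1..n. cos (2 * pi * real m * \<xi>))"
  unfolding Dk_def by (subst sum_int_sym) (simp add: sum_distrib_left)

lemma Dk_cis: "complex_of_real (Dk n \<xi>) = (\<Sum>j\<in>{-int n..int n}. cis (2 * pi * of_int j * \<xi>))"
proof -
  have "(\<Sum>j\<in>{-int n..int n}. cis (2 * pi * of_int j * \<xi>))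
       = 1 + (\<Sum>m=1..n. cis (2 * pi * real m * \<xi>) + cis (- (2 * pi * real m * \<xi>)))"
    by (subst sum_int_sym) simp
  also have "\<dots> = 1 + (\<Sum>m=1..n. complex_of_real (2 * cos (2 * pi * real m * \<xi>)))"
    by (intro arg_cong2[where f="(+)"] sum.cong refl) (simp add: cis.ctr complex_eq_iff)
  finally show ?thesis by (simp add: Dk_alt sum_distrib_left)
qed

lemma Dk_sin: "Dk n \<xi> * sin (pi * \<xi>) = sin ((2 * real n + 1) * pi * \<xi>)"
proof (induction n)
  case 0 then show ?case by (simp add: Dk_alt)
next
  case (Suc n)
  have "Dk (Suc n) \<xi> = Dk n \<xi> + 2 * cos (2 * pi * real (Suc n) * \<xi>)"
    by (simp add: Dk_alt)
  moreover have "2 * cos (2 * pi * real (Suc n) * \<xi>) * sin (pi * \<xi>)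
      = sin ((2 * real (Suc n) + 1) * pi * \<xi>) - sin ((2 * real n + 1) * pi * \<xi>)"
  proof -
    have a: "(2 * real (Suc n) + 1) * pi * \<xi> = 2 * pi * real (Suc n) * \<xi> + pi * \<xi>"
      and b: "(2 * real n + 1) * pi * \<xi> = 2 * pi * real (Suc n) * \<xi> - pi * \<xi>"
      by (simp_all add: algebra_simps)
    show ?thesis unfolding a b sin_add sin_diff by simp
  qed
  ultimately show ?case using Suc by (simp add: algebra_simps)
qed

definition fej :: "nat \<Rightarrow> real \<Rightarrow> real" where
  "fej M \<xi> = (\<Sum>n\<le>M. Dk n \<xi>) / (real M + 1)"

lemma tele_sin: "(\<Sum>n\<le>M. sin ((2 * real n + 1) * pi * \<xi>)) * sin (pi * \<xi>) = (sin ((real M + 1) * pi * \<xi>))\<^sup>2"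
proof (induction M)
  case 0 then show ?case by (simp add: power2_eq_square)
next
  case (Suc M)
  have "sin ((2 * real (Suc M) + 1) * pi * \<xi>) * sin (pi * \<xi>)
      = (sin ((real (Suc M) + 1) * pi * \<xi>))\<^sup>2 - (sin ((real M + 1) * pi * \<xi>))\<^sup>2"
  proof -
    define t where "t = pi * \<xi>"
    have e1: "(2 * real (Suc M) + 1) * pi * \<xi> = (2 * real M + 3) * t"
      and e2: "(real (Suc M) + 1) * pi * \<xi> = (real M + 2) * t"
      and e3: "(real M + 1) * pi * \<xi> = (real M + 1) * t"
      by (simp_all add: t_def algebra_simps)
    have e4: "pi * \<xi> = t" by (simp add: t_def)
    have f1: "sin ((2 * real M + 3) * t) * sin t = (cos ((2 * real M + 2) * t) - cos ((2 * real M + 4) * t)) / 2"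
    proof -
      have x: "(2 * real M + 2) * t = (2 * real M + 3) * t - t" "(2 * real M + 4) * t = (2 * real M + 3) * t + t"
        by (simp_all add: algebra_simps)
      show ?thesis unfolding x cos_add cos_diff by simp
    qed
    have f2: "(sin ((real M + 2) * t))\<^sup>2 = (1 - cos ((2 * real M + 4) * t)) / 2"
      using cos_double_sin[of "(real M + 2) * t"] by (simp add: algebra_simps)
    have f3: "(sin ((real M + 1) * t))\<^sup>2 = (1 - cos ((2 * real M + 2) * t)) / 2"
      using cos_double_sin[of "(real M + 1) * t"] by (simp add: algebra_simps)
    show ?thesis unfolding e1 e2 e3 e4 f1 f2 f3 by (simp add: field_simps)
  qed
  then show ?case using Suc by (simp add: algebra_simps)
qed

lemma fej_sin: "fej M \<xi> * (sin (pi * \<xi>))\<^sup>2 = (sin ((real M + 1) * pi * \<xi>))\<^sup>2 / (real M + 1)"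
proof -
  have "(\<Sum>n\<le>M. Dk n \<xi>) * (sin (pi * \<xi>))\<^sup>2 = (\<Sum>n\<le>M. Dk n \<xi> * sin (pi * \<xi>)) * sin (pi * \<xi>)"
    by (simp add: sum_distrib_right power2_eq_square mult.assoc)
  also have "\<dots> = (sin ((real M + 1) * pi * \<xi>))\<^sup>2"
    by (simp add: Dk_sin tele_sin)
  finally show ?thesis by (simp add: fej_def)
qed

lemma cos_int_int: "j \<in> \<int> \<Longrightarrow> cos (2 * pi * j) = 1"
  by (metis Ints_cases cos_int_2pin)

lemma fej_nonneg: "0 \<le> fej M \<xi>"
proof (cases "sin (pi * \<xi>) = 0")
  case True
  then have "\<xi> \<in> \<int>" using sin_times_pi_eq_0[of \<xi>] by (simp add: mult.commute)
  then have "\<And>j::int. cos (2 * pi * of_int j * \<xi>) = 1"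
    using cos_int_int[of "of_int j * \<xi>" for j] by (simp add: mult.assoc)
  then have "\<And>n. Dk n \<xi> \<ge> 0" by (simp add: Dk_def)
  then show ?thesis by (simp add: fej_def sum_nonneg)
next
  case False
  note s = False
  then have "fej M \<xi> = (sin ((real M + 1) * pi * \<xi>))\<^sup>2 / (real M + 1) / (sin (pi * \<xi>))\<^sup>2"
    by (subst eq_divide_eq) (use fej_sin[of M \<xi>] s in auto)
  then show ?thesis by simp
qed

lemma fej_le: "sin (pi * \<xi>) \<noteq> 0 \<Longrightarrow> fej M \<xi> \<le> 1 / ((real M + 1) * (sin (pi * \<xi>))\<^sup>2)"
proof -
  assume s: "sin (pi * \<xi>) \<noteq> 0"
  then have "fej M \<xi> = (sin ((real M + 1) * pi * \<xi>))\<^sup>2 / (real M + 1) / (sin (pi * \<xi>))\<^sup>2"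
    by (subst eq_divide_eq) (use fej_sin[of M \<xi>] s in auto)
  also have "\<dots> \<le> 1 / (real M + 1) / (sin (pi * \<xi>))\<^sup>2"
    by (intro divide_right_mono) (auto simp: abs_square_le_1 )
  finally show ?thesis by simp
qed

lemma continuous_Dk[continuous_intros]: "continuous_on A (Dk n)"
  unfolding Dk_def by (intro continuous_intros)

lemma continuous_fej[continuous_intros]: "continuous_on A (fej M)"
  unfolding fej_def by (intro continuous_intros) auto

lemma integrable_ind_real:
  fixes f :: "real \<Rightarrow> real"
  assumes "continuous_on {a..b} f"
  shows "integrable lborel (\<lambda>x. indicator {a..b} x * f x)"
  using borel_integrable_atLeastAtMost'[OF assms] unfolding set_integrable_def by simp

lemma integrable_ind_cplx:
  fixes f :: "real \<Rightarrow> complex"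
  assumes "continuous_on {a..b} f"
  shows "integrable lborel (\<lambda>x. indicator {a..b} x * f x)"
proof -
  have "(\<lambda>x. indicator {a..b} x *\<^sub>R f x) = (\<lambda>x. indicator {a..b} x * f x)"
    by (auto simp: fun_eq_iff indicator_def)
  then show ?thesis using borel_integrable_atLeastAtMost'[OF assms] unfolding set_integrable_def
    by simp
qed

lemma int_cos_unit:
  fixes j :: int and a :: real
  assumes "a \<in> \<int>"
  shows "(\<integral>\<xi>. indicator {a-1/2..a+1/2} \<xi> * cos (2 * pi * of_int j * \<xi>) \<partial>lborel) = (if j = 0 then 1 else 0)"
proof (cases "j = 0")
  case True
  have "(\<integral>\<xi>. indicator {a-1/2..a+1/2} \<xi> *\<^sub>R (1::real) \<partial>lborel) = (\<lambda>x. x) (a+1/2) - (\<lambda>x. x) (a-1/2)"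
    by (rule integral_FTC_atLeastAtMost) (auto intro!: derivative_eq_intros continuous_intros)
  then show ?thesis using True by simp
next
  case False
  obtain k where k: "a = of_int k" using assms Ints_cases by blast
  define F where "F \<xi> = sin (2 * pi * of_int j * \<xi>) / (2 * pi * of_int j)" for \<xi>
  have "(\<integral>\<xi>. indicator {a-1/2..a+1/2} \<xi> *\<^sub>R cos (2 * pi * of_int j * \<xi>) \<partial>lborel) = F (a+1/2) - F (a-1/2)"
  proof (rule integral_FTC_atLeastAtMost)
    fix x :: real
    have "(F has_real_derivative cos (2 * pi * of_int j * x)) (at x within {a-1/2..a+1/2})"
      unfolding F_def using False
      by (auto intro!: derivative_eq_intros)
    then show "(F has_vector_derivative cos (2 * pi * of_int j * x)) (at x within {a-1/2..a+1/2})"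
      by (simp add: has_real_derivative_iff_has_vector_derivative)
  qed (auto intro!: continuous_intros)
  moreover have "F (a+1/2) = 0" "F (a-1/2) = 0"
  proof -
    have "2 * pi * of_int j * (a+1/2) = pi * of_int (2*j*k + j)"
         "2 * pi * of_int j * (a-1/2) = pi * of_int (2*j*k - j)"
      by (simp_all add: k algebra_simps)
    then show "F (a+1/2) = 0" "F (a-1/2) = 0" unfolding F_def by (simp_all only: sin_npi_int)
  qed
  ultimately show ?thesis using False by simp
qed

lemma int_Dk_unit:
  assumes "a \<in> \<int>"
  shows "(\<integral>\<xi>. indicator {a-1/2..a+1/2} \<xi> * Dk n \<xi> \<partial>lborel) = 1"
proof -
  have "(\<integral>\<xi>. indicator {a-1/2..a+1/2} \<xi> * Dk n \<xi> \<partial>lborel)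
      = (\<Sum>j\<in>{-int n..int n}. \<integral>\<xi>. indicator {a-1/2..a+1/2} \<xi> * cos (2 * pi * of_int j * \<xi>) \<partial>lborel)"
    unfolding Dk_def sum_distrib_left
    by (subst Bochner_Integration.integral_sum) (auto intro!: integrable_ind_real continuous_intros)
  also have "\<dots> = 1" using assms by (simp add: int_cos_unit)
  finally show ?thesis .
qed

lemma int_fej_unit:
  assumes "a \<in> \<int>"
  shows "(\<integral>\<xi>. indicator {a-1/2..a+1/2} \<xi> * fej M \<xi> \<partial>lborel) = 1"
proof -
  have "(\<integral>\<xi>. indicator {a-1/2..a+1/2} \<xi> * fej M \<xi> \<partial>lborel)
      = (\<Sum>n\<le>M. \<integral>\<xi>. indicator {a-1/2..a+1/2} \<xi> * Dk n \<xi> \<partial>lborel) / (real M + 1)"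
    unfolding fej_def sum_distrib_left times_divide_eq_right
    apply (subst integral_divide_zero)
    apply (subst Bochner_Integration.integral_sum)
    by (auto intro!: integrable_ind_real continuous_intros)
  also have "\<dots> = 1" using assms by (simp add: int_Dk_unit)
  finally show ?thesis .
qed

lemma sin_sq_lower:
  fixes k :: int and d \<xi> :: real
  assumes d: "0 < d" "d \<le> 1/2" and u: "d \<le> \<bar>\<xi> - of_int k\<bar>" "\<bar>\<xi> - of_int k\<bar> \<le> 1/2"
  shows "(sin (pi * d))\<^sup>2 \<le> (sin (pi * \<xi>))\<^sup>2"
proof -
  define u where "u = \<xi> - of_int k"
  have "sin (pi * \<xi>) = sin (pi * u) * cos (pi * k)"
    unfolding u_def by (simp add: algebra_simps sin_diff sin_add)
  moreover have "(cos (pi * k))\<^sup>2 = 1"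
    by (metis cos_squared_eq mult.commute sin_npi_int power2_eq_square mult_zero_left diff_zero)
  ultimately have e: "(sin (pi * \<xi>))\<^sup>2 = (sin (pi * \<bar>u\<bar>))\<^sup>2"
    by (cases "u \<ge> 0") (simp_all add: power_mult_distrib)
  have "sin (pi * d) \<le> sin (pi * \<bar>u\<bar>)"
  proof (intro sin_monotone_2pi_le)
    have "0 \<le> pi * d" using d by simp
    then show "- (pi / 2) \<le> pi * d" using pi_gt_zero by linarith
    show "pi * d \<le> pi * \<bar>u\<bar>" using u unfolding u_def by (intro mult_left_mono) auto
    show "pi * \<bar>u\<bar> \<le> pi / 2" using u unfolding u_def
      using mult_left_mono[of "\<bar>u\<bar>" "1/2" pi] by (simp add: u_def)
  qed
  moreover have "0 \<le> sin (pi * d)" using d by (intro sin_ge_zero) auto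
  ultimately show ?thesis unfolding e by (simp add: power_mono)
qed

lemma approx_id:
  fixes g :: "real \<Rightarrow> complex" and k :: int
  assumes cont: "continuous_on UNIV g"
  shows "(\<lambda>M. \<integral>\<xi>. indicator {k-1/2..k+1/2} \<xi> * (complex_of_real (fej M \<xi>) * (g \<xi> - g k)) \<partial>lborel) \<longlonglongrightarrow> 0"
proof (rule LIMSEQ_I)
  fix r :: real assume r: "0 < r"
  define I where "I = {real_of_int k - 1/2..k+1/2}"
  obtain \<delta> where \<delta>: "\<delta> > 0" "\<And>\<xi>. dist \<xi> k < \<delta> \<Longrightarrow> dist (g \<xi>) (g k) < r/2"
    using cont r unfolding continuous_on_iff by (metis UNIV_I half_gt_zero)
  define d where "d = min \<delta> (1/2)"
  have d: "0 < d" "d \<le> 1/2" "d \<le> \<delta>" using \<delta> by (auto simp: d_def)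
  have "compact ((\<lambda>\<xi>. g \<xi> - g k) ` I)"
    unfolding I_def by (intro compact_continuous_image continuous_intros continuous_on_subset[OF cont]) auto
  then obtain B where B: "B > 0" "\<And>\<xi>. \<xi> \<in> I \<Longrightarrow> norm (g \<xi> - g k) \<le> B"
    using compact_imp_bounded bounded_pos by (metis image_eqI)
  define s where "s = (sin (pi * d))\<^sup>2"
  have "sin (pi * d) > 0"
  proof (rule sin_gt_zero)
    show "0 < pi * d" using d by simp
    have "pi * d \<le> pi * (1/2)" using d by (intro mult_left_mono) auto
    then show "pi * d < pi" using pi_gt_zero by linarith
  qed
  then have s: "s > 0" unfolding s_def by simp
  obtain no :: nat where no: "B / s / (r/2) < real no" using reals_Archimedean2 by blast
  show "\<exists>no. \<forall>M\<ge>no. norm ((\<integral>\<xi>. indicator {k-1/2..k+1/2} \<xi> * (complex_of_real (fej M \<xi>) * (g \<xi> - g k)) \<partial>lborel) - 0) < r"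
  proof (intro exI allI impI)
    fix M assume M: "no \<le> M"
    have CM: "B / ((real M + 1) * s) < r/2"
    proof -
      have "B / s < r/2 * real no" using no r s by (simp add: divide_less_eq mult_ac)
      also have "\<dots> \<le> r/2 * (real M + 1)" using M r by (intro mult_left_mono) auto
      finally have "B / s < r/2 * (real M + 1)" .
      then have "B < r/2 * ((real M + 1) * s)" using s by (simp add: divide_less_eq mult_ac)
      moreover have "(real M + 1) * s > 0" using s by simp
      ultimately show ?thesis by (simp add: divide_less_eq)
    qed
    have int1: "integrable lborel (\<lambda>\<xi>. indicator I \<xi> * (complex_of_real (fej M \<xi>) * (g \<xi> - g k)))"
      unfolding I_def by (intro integrable_ind_cplx continuous_intros continuous_on_subset[OF cont]) auto
    have int2: "integrable lborel (\<lambda>\<xi>. indicator I \<xi> * (r/2 * fej M \<xi> + B / ((real M + 1) * s)))"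
      unfolding I_def by (intro integrable_ind_real continuous_intros)
    have "norm (\<integral>\<xi>. indicator I \<xi> * (complex_of_real (fej M \<xi>) * (g \<xi> - g k)) \<partial>lborel)
        \<le> (\<integral>\<xi>. norm (indicator I \<xi> * (complex_of_real (fej M \<xi>) * (g \<xi> - g k))) \<partial>lborel)"
      by (rule integral_norm_bound)
    also have "\<dots> \<le> (\<integral>\<xi>. indicator I \<xi> * (r/2 * fej M \<xi> + B / ((real M + 1) * s)) \<partial>lborel)"
    proof (rule integral_mono[OF integrable_norm[OF int1] int2])
      fix \<xi> :: real
      show "norm (indicator I \<xi> * (complex_of_real (fej M \<xi>) * (g \<xi> - g k)))
            \<le> indicator I \<xi> * (r/2 * fej M \<xi> + B / ((real M + 1) * s))"
      proof (cases "\<xi> \<in> I")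
        case False then show ?thesis by simp
      next
        case True
        have f0: "0 \<le> fej M \<xi>" by (rule fej_nonneg)
        have nb: "norm (g \<xi> - g k) \<le> B" using B True by auto
        have "fej M \<xi> * norm (g \<xi> - g k) \<le> r/2 * fej M \<xi> + B / ((real M + 1) * s)"
        proof (cases "\<bar>\<xi> - k\<bar> < d")
          case True
          then have "norm (g \<xi> - g k) < r/2" using \<delta>(2)[of \<xi>] d by (simp add: dist_norm dist_real_def)
          then have "fej M \<xi> * norm (g \<xi> - g k) \<le> r/2 * fej M \<xi>"
            using f0 mult_left_mono[of "norm (g \<xi> - g k)" "r/2" "fej M \<xi>"] by (simp add: mult.commute)
          moreover have "0 \<le> B / ((real M + 1) * s)" using B s by simp
          ultimately show ?thesis by linarith
        next
          case False
          have hb: "\<bar>\<xi> - of_int k\<bar> \<le> 1/2" using \<open>\<xi> \<in> I\<close> unfolding I_def abs_le_iff by auto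
          have ss: "s \<le> (sin (pi * \<xi>))\<^sup>2"
            unfolding s_def using d False hb by (intro sin_sq_lower[where d=d and \<xi>=\<xi> and k=k]) auto
          then have sn: "sin (pi * \<xi>) \<noteq> 0" using s by auto
          have "fej M \<xi> \<le> 1 / ((real M + 1) * (sin (pi * \<xi>))\<^sup>2)" by (rule fej_le[OF sn])
          also have "\<dots> \<le> 1 / ((real M + 1) * s)"
            using s ss by (intro divide_left_mono mult_left_mono mult_pos_pos) auto
          finally have "fej M \<xi> * norm (g \<xi> - g k) \<le> 1 / ((real M + 1) * s) * B"
            using f0 nb s by (intro mult_mono) auto
          moreover have "0 \<le> r/2 * fej M \<xi>" using r f0 by simp
          ultimately show ?thesis by simp
        qed
        then show ?thesis using True by (simp add: norm_mult f0)
      qed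
    qed
    also have "\<dots> = r/2 * (\<integral>\<xi>. indicator I \<xi> * fej M \<xi> \<partial>lborel) + B / ((real M + 1) * s) * (\<integral>\<xi>. indicator I \<xi> \<partial>lborel)"
      unfolding distrib_left
      apply (subst Bochner_Integration.integral_add)
      by (auto simp: I_def mult.left_commute intro!: integrable_ind_real continuous_intros integrable_real_indicator)
    also have "\<dots> = r/2 + B / ((real M + 1) * s)"
      using int_fej_unit[of "of_int k" M] by (simp add: I_def)
    also have "\<dots> < r" using CM by linarith
    finally show "norm ((\<integral>\<xi>. indicator {k-1/2..k+1/2} \<xi> * (complex_of_real (fej M \<xi>) * (g \<xi> - g k)) \<partial>lborel) - 0) < r"
      by (simp add: I_def)
  qed
qed

lemma fej_measurable[measurable]: "fej M \<in> borel_measurable borel"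
  by (rule borel_measurable_continuous_onI) (intro continuous_intros)

lemma indicator_partition:
  fixes \<xi> :: real and N :: nat
  assumes "\<bar>\<xi>\<bar> \<le> real N"
  shows "(\<Sum>k\<in>{-int N..int N}. indicator {real_of_int k - 1/2..<real_of_int k + 1/2} \<xi> :: complex) = 1"
proof -
  define k0 where "k0 = \<lfloor>\<xi> + 1/2\<rfloor>"
  have ind: "indicator {real_of_int k - 1/2..<real_of_int k + 1/2} \<xi> = (if k = k0 then 1 else (0::complex))" for k
  proof -
    have "\<xi> \<in> {real_of_int k - 1/2..<real_of_int k + 1/2} \<longleftrightarrow> k0 = k"
      unfolding k0_def floor_eq_iff by auto
    then have "\<xi> \<in> {real_of_int k - 1/2..<real_of_int k + 1/2} \<longleftrightarrow> k = k0" by auto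
    then show ?thesis by (simp add: indicator_def)
  qed
  have "k0 \<in> {-int N..int N}"
    using assms unfolding k0_def by (auto simp: abs_le_iff le_floor_iff floor_le_iff)
  then show ?thesis unfolding ind by (simp add: sum.delta)
qed

lemma fej_conv:
  fixes g :: "real \<Rightarrow> complex" and N :: nat
  assumes cont: "continuous_on UNIV g" and supp: "\<And>\<xi>. real N < \<bar>\<xi>\<bar> \<Longrightarrow> g \<xi> = 0"
  shows "(\<lambda>M. \<integral>\<xi>. complex_of_real (fej M \<xi>) * g \<xi> \<partial>lborel) \<longlonglongrightarrow> (\<Sum>k\<in>{-int N..int N}. g (of_int k))"
proof -
  have gm[measurable]: "g \<in> borel_measurable borel" by (rule borel_measurable_continuous_onI[OF cont])
  define X where "X k M = (\<integral>\<xi>. indicator {real_of_int k-1/2..real_of_int k+1/2} \<xi> * (complex_of_real (fej M \<xi>) * (g \<xi> - g k)) \<partial>lborel)" for k :: int and M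
  have X: "X k \<longlonglongrightarrow> 0" for k unfolding X_def by (rule approx_id[OF cont])
  have eq: "(\<integral>\<xi>. complex_of_real (fej M \<xi>) * g \<xi> \<partial>lborel) = (\<Sum>k\<in>{-int N..int N}. g (of_int k) + X k M)" for M
  proof -
    have "(\<integral>\<xi>. complex_of_real (fej M \<xi>) * g \<xi> \<partial>lborel)
        = (\<integral>\<xi>. (\<Sum>k\<in>{-int N..int N}. indicator {real_of_int k - 1/2..<real_of_int k + 1/2} \<xi> * (complex_of_real (fej M \<xi>) * g \<xi>)) \<partial>lborel)"
    proof (rule Bochner_Integration.integral_cong[OF refl])
      fix \<xi> :: real
      show "complex_of_real (fej M \<xi>) * g \<xi> = (\<Sum>k\<in>{-int N..int N}. indicator {real_of_int k - 1/2..<real_of_int k + 1/2} \<xi> * (complex_of_real (fej M \<xi>) * g \<xi>))"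
      proof (cases "\<bar>\<xi>\<bar> \<le> real N")
        case True
        then show ?thesis by (simp add: sum_distrib_right[symmetric] indicator_partition)
      next
        case False then show ?thesis using supp by simp
      qed
    qed
    also have "\<dots> = (\<Sum>k\<in>{-int N..int N}. \<integral>\<xi>. indicator {real_of_int k - 1/2..<real_of_int k + 1/2} \<xi> * (complex_of_real (fej M \<xi>) * g \<xi>) \<partial>lborel)"
    proof (rule Bochner_Integration.integral_sum)
      fix k :: int
      have "integrable lborel (\<lambda>\<xi>. indicator {real_of_int k - 1/2..real_of_int k + 1/2} \<xi> * (complex_of_real (fej M \<xi>) * g \<xi>))"
        by (intro integrable_ind_cplx continuous_intros continuous_on_subset[OF cont]) auto
      then show "integrable lborel (\<lambda>\<xi>. indicator {real_of_int k - 1/2..<real_of_int k + 1/2} \<xi> * (complex_of_real (fej M \<xi>) * g \<xi>))"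
        apply (rule integrable_cong_AE_imp)
        subgoal by measurable
        subgoal using AE_lborel_singleton[of "real_of_int k + 1/2"] by eventually_elim (auto simp: indicator_def)
        done
    qed
    also have "\<dots> = (\<Sum>k\<in>{-int N..int N}. g (of_int k) + X k M)"
    proof (rule sum.cong[OF refl])
      fix k :: int
      have i1: "(\<integral>\<xi>. indicator {real_of_int k - 1/2..<real_of_int k + 1/2} \<xi> * (complex_of_real (fej M \<xi>) * g \<xi>) \<partial>lborel)
          = (\<integral>\<xi>. indicator {real_of_int k - 1/2..real_of_int k + 1/2} \<xi> * (complex_of_real (fej M \<xi>) * g \<xi>) \<partial>lborel)"
        apply (rule integral_cong_AE)
        subgoal by measurable
        subgoal by measurable
        subgoal using AE_lborel_singleton[of "real_of_int k + 1/2"] by eventually_elim (auto simp: indicator_def)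
        done
      have i2: "(\<integral>\<xi>. indicator {real_of_int k - 1/2..real_of_int k + 1/2} \<xi> * (complex_of_real (fej M \<xi>) * g \<xi>) \<partial>lborel)
          = X k M + (\<integral>\<xi>. indicator {real_of_int k - 1/2..real_of_int k + 1/2} \<xi> * (complex_of_real (fej M \<xi>) * g k) \<partial>lborel)"
      proof -
        have ia: "integrable lborel (\<lambda>\<xi>. indicator {real_of_int k - 1/2..real_of_int k + 1/2} \<xi> * (complex_of_real (fej M \<xi>) * (g \<xi> - g k)))"
          by (intro integrable_ind_cplx continuous_intros continuous_on_subset[OF cont]) auto
        have ib: "integrable lborel (\<lambda>\<xi>. indicator {real_of_int k - 1/2..real_of_int k + 1/2} \<xi> * (complex_of_real (fej M \<xi>) * g k))"
          by (intro integrable_ind_cplx continuous_intros)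
        show ?thesis unfolding X_def
          by (subst Bochner_Integration.integral_add[symmetric, OF ia ib]) (simp add: algebra_simps)
      qed
      have i3: "(\<integral>\<xi>. indicator {real_of_int k - 1/2..real_of_int k + 1/2} \<xi> * (complex_of_real (fej M \<xi>) * g k) \<partial>lborel)
          = complex_of_real (\<integral>\<xi>. indicator {real_of_int k - 1/2..real_of_int k + 1/2} \<xi> * fej M \<xi> \<partial>lborel) * g k"
      proof -
        have "(\<lambda>\<xi>. indicator {real_of_int k - 1/2..real_of_int k + 1/2} \<xi> * (complex_of_real (fej M \<xi>) * g k))
            = (\<lambda>\<xi>. complex_of_real (indicator {real_of_int k - 1/2..real_of_int k + 1/2} \<xi> * fej M \<xi>) * g k)"
          by (auto simp: fun_eq_iff indicator_def)
        then show ?thesis by (simp only: integral_mult_left_zero integral_complex_of_real)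
      qed
      show "(\<integral>\<xi>. indicator {real_of_int k - 1/2..<real_of_int k + 1/2} \<xi> * (complex_of_real (fej M \<xi>) * g \<xi>) \<partial>lborel) = g (of_int k) + X k M"
        unfolding i1 i2 i3 using int_fej_unit[of "real_of_int k" M] by simp
    qed
    finally show ?thesis .
  qed
  have "(\<lambda>M. \<Sum>k\<in>{-int N..int N}. g (of_int k) + X k M) \<longlonglongrightarrow> (\<Sum>k\<in>{-int N..int N}. g (of_int k) + 0)"
    by (intro tendsto_sum tendsto_add tendsto_const X)
  then show ?thesis unfolding eq by simp
qed

definition FT :: "(real \<Rightarrow> real) \<Rightarrow> real \<Rightarrow> complex" where
  "FT \<phi> y = (\<integral>\<xi>. complex_of_real (\<phi> \<xi>) * cis (y * \<xi>) \<partial>lborel)"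

lemma cis_measurable[measurable]: "cis \<in> borel_measurable borel"
proof -
  have "continuous_on UNIV (\<lambda>x. cis x)" by (intro continuous_intros)
  then show ?thesis by (rule borel_measurable_continuous_onI)
qed

lemma FT_measurable[measurable]:
  assumes [measurable]: "\<phi> \<in> borel_measurable borel"
  shows "FT \<phi> \<in> borel_measurable borel"
  unfolding FT_def by measurable

lemma shift_sum_le:
  fixes F :: "real \<Rightarrow> ennreal" and J :: "int set"
  assumes [measurable]: "F \<in> borel_measurable borel" and J: "finite J"
  shows "(\<integral>\<^sup>+t. indicator {0..<2*pi} t * (\<Sum>j\<in>J. F (t + a + 2*pi * of_int j)) \<partial>lborel) \<le> (\<integral>\<^sup>+s. F s \<partial>lborel)"
proof -
  have tr: "(\<integral>\<^sup>+t. indicator {0..<2*pi} t * F (t + a + 2*pi * of_int j) \<partial>lborel)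
      = (\<integral>\<^sup>+s. indicator {0..<2*pi} (s - a - 2*pi * of_int j) * F s \<partial>lborel)" for j
  proof -
    show ?thesis
      using nn_integral_real_affine[where c=1 and t="a + 2*pi * of_int j" and f="\<lambda>s. indicator {0..<2*pi} (s - a - 2*pi * of_int j) * F s"]
      by (simp add: algebra_simps)
  qed
  have "(\<integral>\<^sup>+t. indicator {0..<2*pi} t * (\<Sum>j\<in>J. F (t + a + 2*pi * of_int j)) \<partial>lborel)
      = (\<Sum>j\<in>J. \<integral>\<^sup>+t. indicator {0..<2*pi} t * F (t + a + 2*pi * of_int j) \<partial>lborel)"
    by (simp add: sum_distrib_left nn_integral_sum)
  also have "\<dots> = (\<Sum>j\<in>J. \<integral>\<^sup>+s. indicator {0..<2*pi} (s - a - 2*pi * of_int j) * F s \<partial>lborel)"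
    by (simp add: tr)
  also have "\<dots> = (\<integral>\<^sup>+s. (\<Sum>j\<in>J. indicator {0..<2*pi} (s - a - 2*pi * of_int j)) * F s \<partial>lborel)"
    by (simp add: sum_distrib_right nn_integral_sum)
  also have "\<dots> \<le> (\<integral>\<^sup>+s. F s \<partial>lborel)"
  proof (rule nn_integral_mono)
    fix s :: real
    define j0 where "j0 = \<lfloor>(s - a) / (2*pi)\<rfloor>"
    have ind: "indicator {0..<2*pi} (s - a - 2*pi * of_int j) = (if j = j0 then 1 else (0::ennreal))" for j
    proof -
      have "s - a - 2*pi * of_int j \<in> {0..<2*pi} \<longleftrightarrow> of_int j \<le> (s - a) / (2*pi) \<and> (s - a) / (2*pi) < of_int j + 1"
        by (auto simp: field_simps)
      also have "\<dots> \<longleftrightarrow> j0 = j" unfolding j0_def floor_eq_iff ..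
      finally show ?thesis by (auto simp: indicator_def)
    qed
    have "(\<Sum>j\<in>J. indicator {0..<2*pi} (s - a - 2*pi * of_int j)) \<le> (1::ennreal)"
      unfolding ind using J by (simp add: sum.delta)
    then show "(\<Sum>j\<in>J. indicator {0..<2*pi} (s - a - 2*pi * of_int j)) * F s \<le> F s"
      using mult_right_mono[of _ 1 "F s"] by simp
  qed
  finally show ?thesis .
qed

definition sig :: "(real \<Rightarrow> real) \<Rightarrow> nat \<Rightarrow> real \<Rightarrow> complex" where
  "sig \<phi> M x = (\<Sum>n\<le>M. \<Sum>j\<in>{-int n..int n}. FT \<phi> (x + 2*pi * of_int j)) / (of_nat M + 1)"

lemma sig_eq:
  fixes \<phi> :: "real \<Rightarrow> real" and N :: nat
  assumes cont: "continuous_on UNIV \<phi>" and supp: "\<And>\<xi>. real N < \<bar>\<xi>\<bar> \<Longrightarrow> \<phi> \<xi> = 0"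
  shows "sig \<phi> M x = (\<integral>\<xi>. complex_of_real (fej M \<xi>) * (complex_of_real (\<phi> \<xi>) * cis (x * \<xi>)) \<partial>lborel)"
proof -
  have intg: "integrable lborel (\<lambda>\<xi>. complex_of_real (\<phi> \<xi>) * cis (a * \<xi>))" for a
    by (rule integrable_cont_supp[where R="real N"]) (auto intro!: continuous_intros cont simp: supp)
  have pw: "complex_of_real (fej M \<xi>) * (complex_of_real (\<phi> \<xi>) * cis (x * \<xi>))
      = (\<Sum>n\<le>M. \<Sum>j\<in>{-int n..int n}. complex_of_real (\<phi> \<xi>) * cis ((x + 2*pi * of_int j) * \<xi>)) / (of_nat M + 1)" for \<xi>
  proof -
    have "complex_of_real (fej M \<xi>) = (\<Sum>n\<le>M. \<Sum>j\<in>{-int n..int n}. cis (2 * pi * of_int j * \<xi>)) / (of_nat M + 1)"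
      by (simp add: fej_def Dk_cis[symmetric])
    then show ?thesis
      by (simp add: sum_distrib_left sum_distrib_right sum_divide_distrib cis_mult algebra_simps)
  qed
  have "(\<integral>\<xi>. complex_of_real (fej M \<xi>) * (complex_of_real (\<phi> \<xi>) * cis (x * \<xi>)) \<partial>lborel)
      = (\<Sum>n\<le>M. \<Sum>j\<in>{-int n..int n}. \<integral>\<xi>. complex_of_real (\<phi> \<xi>) * cis ((x + 2*pi * of_int j) * \<xi>) \<partial>lborel) / (of_nat M + 1)"
    unfolding pw
    apply (subst integral_divide_zero)
    apply (subst Bochner_Integration.integral_sum)
     apply (rule Bochner_Integration.integrable_sum)
     apply (rule intg)
    apply (subst Bochner_Integration.integral_sum)
     apply (rule intg)
    apply (rule refl)
    done
  then show ?thesis by (simp add: sig_def FT_def)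
qed

lemma sig_L1:
  fixes \<phi> :: "real \<Rightarrow> real"
  assumes [measurable]: "\<phi> \<in> borel_measurable borel"
  shows "(\<integral>\<^sup>+t. indicator {0..<2*pi} t * ennreal (norm (sig \<phi> M (t - y))) \<partial>lborel)
      \<le> (\<integral>\<^sup>+x. ennreal (norm (FT \<phi> x)) \<partial>lborel)"
proof -
  define I where "I = (\<integral>\<^sup>+x. ennreal (norm (FT \<phi> x)) \<partial>lborel)"
  define S where "S n t = (\<Sum>j\<in>{-int n..int n}. norm (FT \<phi> (t - y + 2*pi * of_int j)))" for n t
  have S0: "0 \<le> S n t" for n t unfolding S_def by (simp add: sum_nonneg)
  have Sm[measurable]: "(\<lambda>t. S n t) \<in> borel_measurable borel" for n unfolding S_def by measurable
  have bound: "norm (sig \<phi> M (t - y)) \<le> (\<Sum>n\<le>M. S n t) / (real M + 1)" for t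
  proof -
    have "norm (sig \<phi> M (t - y)) = norm (\<Sum>n\<le>M. \<Sum>j\<in>{-int n..int n}. FT \<phi> (t - y + 2*pi * of_int j)) / (real M + 1)"
    proof -
      have "(of_nat M + 1::complex) = of_nat (Suc M)" by simp
      then have nm: "norm (of_nat M + 1 :: complex) = real M + 1" by (simp only: norm_of_nat)
      show ?thesis unfolding sig_def norm_divide nm by (simp add: add.commute)
    qed
    also have "\<dots> \<le> (\<Sum>n\<le>M. S n t) / (real M + 1)"
      unfolding S_def by (intro divide_right_mono order.trans[OF norm_sum sum_mono] norm_sum) auto
    finally show ?thesis .
  qed
  have Sn: "(\<integral>\<^sup>+t. indicator {0..<2*pi} t * ennreal (S n t) \<partial>lborel) \<le> I" for n
  proof -
    have "(\<integral>\<^sup>+t. indicator {0..<2*pi} t * ennreal (S n t) \<partial>lborel)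
       = (\<integral>\<^sup>+t. indicator {0..<2*pi} t * (\<Sum>j\<in>{-int n..int n}. ennreal (norm (FT \<phi> (t + (-y) + 2*pi * of_int j)))) \<partial>lborel)"
      unfolding S_def by (subst sum_ennreal) auto
    also have "\<dots> \<le> I" unfolding I_def by (rule shift_sum_le) auto
    finally show ?thesis .
  qed
  have "(\<integral>\<^sup>+t. indicator {0..<2*pi} t * ennreal (norm (sig \<phi> M (t - y))) \<partial>lborel)
      \<le> (\<integral>\<^sup>+t. ennreal (1 / (real M + 1)) * (\<Sum>n\<le>M. indicator {0..<2*pi} t * ennreal (S n t)) \<partial>lborel)"
  proof (rule nn_integral_mono)
    fix t
    have "ennreal (norm (sig \<phi> M (t - y))) \<le> ennreal ((\<Sum>n\<le>M. S n t) / (real M + 1))"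
      using bound by (rule ennreal_leI)
    also have "\<dots> = ennreal (1 / (real M + 1)) * (\<Sum>n\<le>M. ennreal (S n t))"
      by (subst sum_ennreal) (auto simp: S0 sum_nonneg ennreal_mult''[symmetric])
    finally show "indicator {0..<2*pi} t * ennreal (norm (sig \<phi> M (t - y)))
        \<le> ennreal (1 / (real M + 1)) * (\<Sum>n\<le>M. indicator {0..<2*pi} t * ennreal (S n t))"
      by (auto simp: indicator_def)
  qed
  also have "\<dots> = ennreal (1 / (real M + 1)) * (\<Sum>n\<le>M. \<integral>\<^sup>+t. indicator {0..<2*pi} t * ennreal (S n t) \<partial>lborel)"
    apply (subst nn_integral_cmult)
    subgoal by measurable
    apply (subst nn_integral_sum)
    subgoal by measurable
    apply (rule refl)
    done
  also have "\<dots> \<le> ennreal (1 / (real M + 1)) * (\<Sum>n\<le>M. I)"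
    by (intro mult_left_mono sum_mono Sn) auto
  also have "\<dots> = I"
  proof -
    have "ennreal (1 / (real M + 1)) * of_nat (Suc M) = 1"
      by (simp add: ennreal_of_nat_eq_real_of_nat ennreal_mult''[symmetric] del: of_nat_Suc)
    then show ?thesis by (simp add: mult.assoc[symmetric] del: of_nat_Suc)
  qed
  finally show ?thesis unfolding I_def .
qed

lemma kernel1d:
  fixes \<phi> :: "real \<Rightarrow> real" and N :: nat
  assumes cont: "continuous_on UNIV \<phi>" and supp: "\<And>\<xi>. real N < \<bar>\<xi>\<bar> \<Longrightarrow> \<phi> \<xi> = 0"
  shows "(\<integral>\<^sup>+t. indicator {0..<2*pi} t *
            ennreal (norm (\<Sum>k\<in>{-int N..int N}. complex_of_real (\<phi> (of_int k)) * cis (of_int k * (t - y)))) \<partial>lborel)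
      \<le> (\<integral>\<^sup>+x. ennreal (norm (FT \<phi> x)) \<partial>lborel)"
proof -
  have [measurable]: "\<phi> \<in> borel_measurable borel" by (rule borel_measurable_continuous_onI[OF cont])
  define K where "K x = (\<Sum>k\<in>{-int N..int N}. complex_of_real (\<phi> (of_int k)) * cis (of_int k * x))" for x
  have conv: "(\<lambda>M. sig \<phi> M x) \<longlonglongrightarrow> K x" for x
  proof -
    have "(\<lambda>M. \<integral>\<xi>. complex_of_real (fej M \<xi>) * (complex_of_real (\<phi> \<xi>) * cis (x * \<xi>)) \<partial>lborel)
        \<longlonglongrightarrow> (\<Sum>k\<in>{-int N..int N}. complex_of_real (\<phi> (of_int k)) * cis (x * of_int k))"
      by (rule fej_conv) (auto intro!: continuous_intros cont simp: supp)
    moreover have "(\<lambda>M. sig \<phi> M x) = (\<lambda>M. \<integral>\<xi>. complex_of_real (fej M \<xi>) * (complex_of_real (\<phi> \<xi>) * cis (x * \<xi>)) \<partial>lborel)"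
      by (rule ext, rule sig_eq[OF cont supp])
    moreover have "K x = (\<Sum>k\<in>{-int N..int N}. complex_of_real (\<phi> (of_int k)) * cis (x * of_int k))"
      unfolding K_def by (simp add: mult.commute)
    ultimately show ?thesis by simp
  qed
  have "(\<integral>\<^sup>+t. indicator {0..<2*pi} t * ennreal (norm (K (t - y))) \<partial>lborel)
      = (\<integral>\<^sup>+t. liminf (\<lambda>M. indicator {0..<2*pi} t * ennreal (norm (sig \<phi> M (t - y)))) \<partial>lborel)"
  proof (rule nn_integral_cong)
    fix t
    have "(\<lambda>M. indicator {0..<2*pi} t * ennreal (norm (sig \<phi> M (t - y))))
        \<longlonglongrightarrow> indicator {0..<2*pi} t * ennreal (norm (K (t - y)))"
      by (cases "t \<in> {0..<2*pi}") (auto intro!: tendsto_intros conv)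
    then show "indicator {0..<2*pi} t * ennreal (norm (K (t - y)))
        = liminf (\<lambda>M. indicator {0..<2*pi} t * ennreal (norm (sig \<phi> M (t - y))))"
      by (simp add: lim_imp_Liminf)
  qed
  also have "\<dots> \<le> liminf (\<lambda>M. \<integral>\<^sup>+t. indicator {0..<2*pi} t * ennreal (norm (sig \<phi> M (t - y))) \<partial>lborel)"
    by (rule nn_integral_liminf) (unfold sig_def, measurable)
  also have "\<dots> \<le> (\<integral>\<^sup>+x. ennreal (norm (FT \<phi> x)) \<partial>lborel)"
    by (rule Liminf_le) (auto intro!: always_eventually sig_L1)
  finally show ?thesis unfolding K_def .
qed

lemma cis_vd: "((\<lambda>\<xi>. cis (y * \<xi>)) has_vector_derivative (\<i> * complex_of_real y * cis (y * \<xi>))) (at \<xi> within S)"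
proof -
  have "((\<lambda>z. exp (\<i> * complex_of_real y * z)) has_field_derivative (\<i> * complex_of_real y * exp (\<i> * complex_of_real y * complex_of_real \<xi>))) (at (complex_of_real \<xi>))"
    by (auto intro!: derivative_eq_intros)
  from has_vector_derivative_real_field[OF this, of S]
  show ?thesis by (simp add: cis_conv_exp mult.assoc)
qed

lemma deriv_zero_outside:
  fixes \<phi> \<phi>' :: "real \<Rightarrow> real"
  assumes d: "\<And>x. (\<phi> has_real_derivative \<phi>' x) (at x)" and s: "\<And>\<xi>. R < \<bar>\<xi>\<bar> \<Longrightarrow> \<phi> \<xi> = 0"
    and x: "R < \<bar>x\<bar>"
  shows "\<phi>' x = 0"
proof -
  have op: "open {\<xi>::real. R < \<bar>\<xi>\<bar>}"
    by (rule open_Collect_less) (auto intro!: continuous_intros)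
  have "((\<lambda>_. 0) has_real_derivative \<phi>' x) (at x)"
    by (rule has_field_derivative_transform_within_open[OF d op]) (use x s in auto)
  moreover have "((\<lambda>_. 0) has_real_derivative 0) (at x)" by simp
  ultimately show ?thesis using DERIV_unique by blast
qed

lemma FT_deriv:
  fixes \<phi> \<phi>' :: "real \<Rightarrow> real"
  assumes d: "\<And>x. (\<phi> has_real_derivative \<phi>' x) (at x)" and c': "continuous_on UNIV \<phi>'"
    and s: "\<And>\<xi>. R < \<bar>\<xi>\<bar> \<Longrightarrow> \<phi> \<xi> = 0" and R: "0 \<le> R"
  shows "FT \<phi>' y + \<i> * complex_of_real y * FT \<phi> y = 0"
proof -
  have c: "continuous_on UNIV \<phi>" using d by (meson DERIV_isCont continuous_at_imp_continuous_on)
  have s': "\<phi>' \<xi> = 0" if "R < \<bar>\<xi>\<bar>" for \<xi> using deriv_zero_outside[OF d s that] .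
  define a where "a = R + 1"
  define f where "f \<xi> = complex_of_real (\<phi>' \<xi>) * cis (y * \<xi>) + \<i> * complex_of_real y * (complex_of_real (\<phi> \<xi>) * cis (y * \<xi>))" for \<xi>
  define F where "F \<xi> = complex_of_real (\<phi> \<xi>) * cis (y * \<xi>)" for \<xi>
  have "(\<integral>\<xi>. indicator {-a..a} \<xi> *\<^sub>R f \<xi> \<partial>lborel) = F a - F (-a)"
  proof (rule integral_FTC_atLeastAtMost)
    fix x
    have "(F has_vector_derivative (complex_of_real (\<phi> x) * (\<i> * complex_of_real y * cis (y * x)) + complex_of_real (\<phi>' x) * cis (y * x))) (at x within {-a..a})"
      unfolding F_def
      by (intro has_vector_derivative_mult cis_vd has_vector_derivative_of_real DERIV_subset[OF d]) auto
    then show "(F has_vector_derivative f x) (at x within {-a..a})"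
      by (simp add: f_def algebra_simps)
  qed (auto simp: a_def R f_def intro!: continuous_intros continuous_on_subset[OF c] continuous_on_subset[OF c'])
  moreover have "F a = 0" "F (-a) = 0" using s R by (auto simp: F_def a_def)
  moreover have "(\<lambda>\<xi>. indicator {-a..a} \<xi> *\<^sub>R f \<xi>) = f"
    using s s' R by (auto simp: fun_eq_iff indicator_def f_def a_def)
  ultimately have "(\<integral>\<xi>. f \<xi> \<partial>lborel) = 0" by simp
  moreover have "(\<integral>\<xi>. f \<xi> \<partial>lborel) = FT \<phi>' y + \<i> * complex_of_real y * FT \<phi> y"
  proof -
    have i1: "integrable lborel (\<lambda>\<xi>. complex_of_real (\<phi>' \<xi>) * cis (y * \<xi>))"
      by (rule integrable_cont_supp[where R=R]) (auto intro!: continuous_intros c' simp: s')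
    have i2: "integrable lborel (\<lambda>\<xi>. complex_of_real (\<phi> \<xi>) * cis (y * \<xi>))"
      by (rule integrable_cont_supp[where R=R]) (auto intro!: continuous_intros c simp: s)
    show ?thesis unfolding f_def FT_def
      by (subst Bochner_Integration.integral_add) (auto intro!: i1 i2)
  qed
  ultimately show ?thesis by simp
qed

lemma FT_integrable:
  fixes \<phi> \<phi>' \<phi>'' :: "real \<Rightarrow> real"
  assumes d: "\<And>x. (\<phi> has_real_derivative \<phi>' x) (at x)"
    and d': "\<And>x. (\<phi>' has_real_derivative \<phi>'' x) (at x)"
    and c'': "continuous_on UNIV \<phi>''"
    and s: "\<And>\<xi>. R < \<bar>\<xi>\<bar> \<Longrightarrow> \<phi> \<xi> = 0" and R: "0 \<le> R"
  shows "integrable lborel (\<lambda>y. norm (FT \<phi> y))"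
proof -
  have c: "continuous_on UNIV \<phi>" using d by (meson DERIV_isCont continuous_at_imp_continuous_on)
  have c': "continuous_on UNIV \<phi>'" using d' by (meson DERIV_isCont continuous_at_imp_continuous_on)
  have s': "\<phi>' \<xi> = 0" if "R < \<bar>\<xi>\<bar>" for \<xi> using deriv_zero_outside[OF d s that] .
  have s'': "\<phi>'' \<xi> = 0" if "R < \<bar>\<xi>\<bar>" for \<xi> using deriv_zero_outside[OF d' s' that] .
  have [measurable]: "\<phi> \<in> borel_measurable borel" by (rule borel_measurable_continuous_onI[OF c])
  define C0 where "C0 = (\<integral>\<xi>. norm (complex_of_real (\<phi> \<xi>)) \<partial>lborel)"
  define C2 where "C2 = (\<integral>\<xi>. norm (complex_of_real (\<phi>'' \<xi>)) \<partial>lborel)"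
  have b0: "norm (FT \<phi> y) \<le> C0" for y
  proof -
    have "norm (FT \<phi> y) \<le> (\<integral>\<xi>. norm (complex_of_real (\<phi> \<xi>) * cis (y * \<xi>)) \<partial>lborel)"
      unfolding FT_def by (rule integral_norm_bound)
    then show ?thesis by (simp add: C0_def norm_mult)
  qed
  have b2: "norm (FT \<phi>'' y) \<le> C2" for y
  proof -
    have "norm (FT \<phi>'' y) \<le> (\<integral>\<xi>. norm (complex_of_real (\<phi>'' \<xi>) * cis (y * \<xi>)) \<partial>lborel)"
      unfolding FT_def by (rule integral_norm_bound)
    then show ?thesis by (simp add: C2_def norm_mult)
  qed
  have C0: "0 \<le> C0" unfolding C0_def by simp
  have C2: "0 \<le> C2" unfolding C2_def by simp
  have e1: "FT \<phi>' y + \<i> * complex_of_real y * FT \<phi> y = 0" for y by (rule FT_deriv[OF d c' s R])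
  have e2: "FT \<phi>'' y + \<i> * complex_of_real y * FT \<phi>' y = 0" for y by (rule FT_deriv[OF d' c'' s' R])
  have key: "complex_of_real (y^2) * FT \<phi> y = - FT \<phi>'' y" for y
  proof -
    have a: "FT \<phi>' y = - (\<i> * complex_of_real y * FT \<phi> y)" using e1[of y] by (simp add: eq_neg_iff_add_eq_0)
    have b: "FT \<phi>'' y = - (\<i> * complex_of_real y * FT \<phi>' y)" using e2[of y] by (simp add: eq_neg_iff_add_eq_0)
    have "FT \<phi>'' y = \<i> * (\<i> * (complex_of_real y * (complex_of_real y * FT \<phi> y)))"
      unfolding b a by (simp add: algebra_simps)
    also have "\<dots> = - (complex_of_real y * (complex_of_real y * FT \<phi> y))" by (rule complex_i_mult_minus)
    finally show ?thesis by (simp add: power2_eq_square algebra_simps)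
  qed
  have bound: "norm (FT \<phi> y) \<le> 2 * (C0 + C2) * inverse (1 + y^2)" for y
  proof (cases "\<bar>y\<bar> \<le> 1")
    case True
    then have "\<bar>y\<bar> * \<bar>y\<bar> \<le> 1 * 1" by (intro mult_mono) auto
    then have "y^2 \<le> 1" by (simp add: power2_eq_square)
    moreover have p: "0 < 1 + y^2" by (metis add_pos_nonneg zero_le_power2 zero_less_one)
    ultimately have "1 \<le> 2 / (1 + y^2)" by (simp add: le_divide_eq)
    then have "1 \<le> 2 * inverse (1 + y^2)" by (simp add: divide_inverse)
    then have "C0 * 1 \<le> C0 * (2 * inverse (1 + y^2))" using C0 by (rule mult_left_mono)
    then have "C0 \<le> 2 * C0 * inverse (1 + y^2)" by (simp add: mult_ac)
    moreover have "2 * C0 * inverse (1 + y^2) \<le> 2 * (C0 + C2) * inverse (1 + y^2)"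
      using C2 by (intro mult_right_mono) (auto)
    ultimately show ?thesis using b0[of y] by linarith
  next
    case False
    then have "1 \<le> \<bar>y\<bar>" by simp
    then have "1 * 1 \<le> \<bar>y\<bar> * \<bar>y\<bar>" by (intro mult_mono) auto
    then have y2: "1 \<le> y^2" by (simp add: power2_eq_square)
    have "y^2 * norm (FT \<phi> y) = norm (FT \<phi>'' y)"
    proof -
      have n: "norm (complex_of_real (y^2)) = y^2" by (simp only: norm_of_real) simp
      have "norm (complex_of_real (y^2) * FT \<phi> y) = norm (FT \<phi>'' y)" using key[of y] by simp
      then show ?thesis by (simp only: norm_mult n)
    qed
    then have "y^2 * norm (FT \<phi> y) \<le> C2" using b2[of y] by simp
    moreover have yp: "0 < y^2" using y2 by linarith
    ultimately have "norm (FT \<phi> y) \<le> C2 / y^2" by (simp add: le_divide_eq mult.commute)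
    also have "\<dots> \<le> 2 * C2 * inverse (1 + y^2)"
    proof -
      have p: "0 < 1 + y^2" using yp by linarith
      have "1 + y^2 \<le> 2 * y^2" using y2 by linarith
      then have "inverse (y^2) \<le> 2 * inverse (1 + y^2)"
        using p yp by (simp add: inverse_eq_divide divide_le_eq le_divide_eq mult.commute)
      then have "C2 * inverse (y^2) \<le> C2 * (2 * inverse (1 + y^2))" using C2 by (rule mult_left_mono)
      then show ?thesis by (simp add: divide_inverse mult_ac)
    qed
    also have "\<dots> \<le> 2 * (C0 + C2) * inverse (1 + y^2)" using C0 by (intro mult_right_mono) auto
    finally show ?thesis .
  qed
  have "integrable lborel (\<lambda>y. inverse (1 + y^2) :: real)"
    using integrable_inverse_1_plus_square unfolding set_integrable_def by simp
  then have "integrable lborel (\<lambda>y. 2 * (C0 + C2) * inverse (1 + y^2) :: real)" by simp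
  then show ?thesis
  proof (rule Bochner_Integration.integrable_bound)
    show "(\<lambda>y. norm (FT \<phi> y)) \<in> borel_measurable lborel" by measurable
    show "AE y in lborel. norm (norm (FT \<phi> y)) \<le> norm (2 * (C0 + C2) * inverse (1 + y^2))"
    proof (rule AE_I2)
      fix y :: real
      have "0 \<le> 2 * (C0 + C2) * inverse (1 + y^2)" using C0 C2 by simp
      then show "norm (norm (FT \<phi> y)) \<le> norm (2 * (C0 + C2) * inverse (1 + y^2))"
        using bound[of y] by simp
    qed
  qed
qed

lemma c_psi_ge:
  assumes "j \<in> {0,1}"
  shows "1 / (2 * pi) * (\<integral>x. norm (FT (phi \<psi> j) x) \<partial>lborel) \<le> c_psi \<psi>"
  unfolding c_psi_def FT_def using assms by (intro Max_ge) auto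

lemma c_psi_nonneg: "0 \<le> c_psi \<psi>"
proof -
  have "0 \<le> 1 / (2 * pi) * (\<integral>x. norm (FT (phi \<psi> 0) x) \<partial>lborel)"
    by (intro mult_nonneg_nonneg integral_nonneg_AE) auto
  then show ?thesis using c_psi_ge[OF insertI1, of \<psi>] by (rule order.trans)
qed

lemma chain_half:
  assumes "\<And>x. (f has_real_derivative f' x) (at x)"
  shows "((\<lambda>z. f (z/2)) has_real_derivative f' (x/2) / 2) (at x)"
proof -
  have "((\<lambda>z. z/2) has_real_derivative 1/2) (at x)" by (auto intro!: derivative_eq_intros)
  from DERIV_chain2[OF assms this] show ?thesis by simp
qed

locale adm =
  fixes \<psi> :: "real \<Rightarrow> real"
  assumes adm: "admissible \<psi>"
begin

lemma psi_props:
  shows "\<And>\<xi>. 3/2 < \<bar>\<xi>\<bar> \<Longrightarrow> \<psi> \<xi> = 0" and "\<And>\<xi>. \<bar>\<xi>\<bar> \<le> 1 \<Longrightarrow> \<psi> \<xi> = 1"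
    and "\<And>\<xi>. 0 \<le> \<psi> \<xi>" and "\<And>\<xi>. \<psi> \<xi> \<le> \<psi> (\<xi>/2)"
  using adm unfolding admissible_def by auto

lemma smooth_D: obtains D where "D 0 = \<psi>" "\<And>n x. (D n has_real_derivative D (Suc n) x) (at x)"
proof -
  have "smooth \<psi>" using adm unfolding admissible_def by blast
  then obtain D where "D 0 = \<psi>" "\<forall>n x. (D n has_real_derivative D (Suc n) x) (at x)"
    unfolding smooth_def by blast
  then show ?thesis using that by blast
qed

lemma D_cont: "(\<And>n x. (D n has_real_derivative D (Suc n) x) (at x)) \<Longrightarrow> continuous_on UNIV (D n)"
  by (meson DERIV_isCont continuous_at_imp_continuous_on)

lemma psi_cont: "continuous_on UNIV \<psi>"
proof -
  obtain D where D0: "D 0 = \<psi>" and D: "\<And>n x. (D n has_real_derivative D (Suc n) x) (at x)" using smooth_D by blast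
  show ?thesis using D_cont[where D=D, OF D, of 0] D0 by simp
qed

lemma phi_cont: "continuous_on UNIV (phi \<psi> j)"
proof -
  have c: "continuous_on UNIV (\<lambda>\<xi>. \<psi> (f \<xi>))" if "continuous_on UNIV f" for f
    using continuous_on_compose2[OF psi_cont that] by auto
  show ?thesis unfolding phi_def
    by (cases "j = 0") (auto intro!: continuous_intros c psi_cont)
qed

lemma phi_supp: "real (2 ^ (j+1)) < \<bar>\<xi>\<bar> \<Longrightarrow> phi \<psi> j \<xi> = 0"
proof -
  assume a: "real (2 ^ (j+1)) < \<bar>\<xi>\<bar>"
  show ?thesis
  proof (cases "j = 0")
    case True then show ?thesis using a psi_props(1)[of \<xi>] by (simp add: phi_def)
  next
    case False
    have "\<bar>\<xi> / 2^j\<bar> = \<bar>\<xi>\<bar> / 2^j" by (simp add: abs_divide)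
    moreover have "\<bar>\<xi>\<bar> / 2^j > 2" using a by (simp add: field_simps)
    ultimately have "3/2 < \<bar>\<xi> / 2^j\<bar>" by linarith
    then have 1: "\<psi> (\<xi> / 2^j) = 0" by (rule psi_props(1))
    have "\<bar>\<xi> / 2^(j-1)\<bar> = \<bar>\<xi>\<bar> / 2^(j-1)" by (simp add: abs_divide)
    moreover have "(2::real)^(j+1) = 2^(j-1) * 4"
    proof -
      obtain m where m: "j = Suc m" using False by (cases j) auto
      show ?thesis unfolding m by simp
    qed
    then have "\<bar>\<xi>\<bar> / 2^(j-1) > 4" using a by (simp add: field_simps)
    ultimately have "3/2 < \<bar>\<xi> / 2^(j-1)\<bar>" by linarith
    then have 2: "\<psi> (\<xi> / 2^(j-1)) = 0" by (rule psi_props(1))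
    show ?thesis using False 1 2 by (simp add: phi_def)
  qed
qed

lemma phi_scale: "1 \<le> j \<Longrightarrow> phi \<psi> j \<xi> = phi \<psi> 1 (\<xi> / 2^(j-1))"
proof -
  assume j: "1 \<le> j"
  obtain m where m: "j = Suc m" using j by (cases j) auto
  have "(2::real)^j = 2^(j-1) * 2" unfolding m by simp
  then show ?thesis using j by (simp add: phi_def)
qed

lemma FT_phi_integrable:
  assumes "j \<in> {0,1}"
  shows "integrable lborel (\<lambda>y. norm (FT (phi \<psi> j) y))"
proof -
  obtain D where D0: "D 0 = \<psi>" and D: "\<And>n x. (D n has_real_derivative D (Suc n) x) (at x)" using smooth_D by blast
  show ?thesis
  proof (cases "j = 0")
    case True
    have "phi \<psi> j = D 0" using True D0 by (simp add: fun_eq_iff phi_def)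
    moreover have "integrable lborel (\<lambda>y. norm (FT (D 0) y))"
      by (rule FT_integrable[where R="3/2", OF D D D_cont[where D=D, OF D]]) (use psi_props(1) D0 in auto)
    ultimately show ?thesis by simp
  next
    case False
    then have j: "j = 1" using assms by auto
    have e: "phi \<psi> j = (\<lambda>\<xi>. D 0 (\<xi>/2) - D 0 \<xi>)" using j D0 by (simp add: fun_eq_iff phi_def)
    have d1: "((\<lambda>\<xi>. D 0 (\<xi>/2) - D 0 \<xi>) has_real_derivative (D 1 (x/2) / 2 - D 1 x)) (at x)" for x
      using chain_half[where f="D 0", OF D] D[of 0 x] by (auto intro!: derivative_eq_intros)
    have d2: "((\<lambda>\<xi>. D 1 (\<xi>/2) / 2 - D 1 \<xi>) has_real_derivative (D 2 (x/2) / 4 - D 2 x)) (at x)" for x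
      using chain_half[where f="D 1", OF D] D[of 1 x] by (auto intro!: derivative_eq_intros simp: numeral_2_eq_2)
    have c2: "continuous_on UNIV (\<lambda>\<xi>. D 2 (\<xi>/2) / 4 - D 2 \<xi>)"
      using D_cont[where D=D, OF D, of 2] by (auto intro!: continuous_intros continuous_on_compose2[of UNIV "D 2"])
    have s: "D 0 (\<xi>/2) - D 0 \<xi> = 0" if "3 < \<bar>\<xi>\<bar>" for \<xi>
      using psi_props(1)[of "\<xi>/2"] psi_props(1)[of \<xi>] that D0 by (auto simp: abs_divide)
    show ?thesis unfolding e by (rule FT_integrable[OF d1 d2 c2 s]) auto
  qed
qed

end

context adm begin

lemma nnFT_01:
  assumes "j \<in> {0,1}"
  shows "(\<integral>\<^sup>+y. ennreal (norm (FT (phi \<psi> j) y)) \<partial>lborel) \<le> ennreal (2 * pi * c_psi \<psi>)"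
proof -
  have "(\<integral>\<^sup>+y. ennreal (norm (FT (phi \<psi> j) y)) \<partial>lborel) = ennreal (\<integral>y. norm (FT (phi \<psi> j) y) \<partial>lborel)"
    by (rule nn_integral_eq_integral[OF FT_phi_integrable[OF assms]]) auto
  also have "\<dots> \<le> ennreal (2 * pi * c_psi \<psi>)"
  proof (rule ennreal_leI)
    have "1 / (2 * pi) * (\<integral>x. norm (FT (phi \<psi> j) x) \<partial>lborel) \<le> c_psi \<psi>" by (rule c_psi_ge[OF assms])
    then show "(\<integral>y. norm (FT (phi \<psi> j) y) \<partial>lborel) \<le> 2 * pi * c_psi \<psi>"
      by (simp add: field_simps)
  qed
  finally show ?thesis .
qed

lemma FT_scale:
  assumes j: "1 \<le> j"
  shows "FT (phi \<psi> j) y = complex_of_real (2^(j-1)) * FT (phi \<psi> 1) (2^(j-1) * y)"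
proof -
  define a :: real where "a = 2^(j-1)"
  have a: "a > 0" unfolding a_def by simp
  have "FT (phi \<psi> j) y = (\<integral>\<xi>. complex_of_real (phi \<psi> 1 (\<xi> / a)) * cis (y * \<xi>) \<partial>lborel)"
    unfolding FT_def a_def using phi_scale[OF j] by simp
  also have "\<dots> = \<bar>a\<bar> *\<^sub>R (\<integral>\<eta>. complex_of_real (phi \<psi> 1 ((0 + a * \<eta>) / a)) * cis (y * (0 + a * \<eta>)) \<partial>lborel)"
    by (rule lborel_integral_real_affine) (use a in simp)
  also have "\<dots> = complex_of_real a * FT (phi \<psi> 1) (a * y)"
    unfolding FT_def using a by (simp add: scaleR_conv_of_real mult_ac)
  finally show ?thesis unfolding a_def .
qed

lemma nnFT_bound:
  "(\<integral>\<^sup>+y. ennreal (norm (FT (phi \<psi> j) y)) \<partial>lborel) \<le> ennreal (2 * pi * c_psi \<psi>)"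
proof (cases "j \<le> 1")
  case True then show ?thesis using nnFT_01[of j] by (cases j) auto
next
  case False
  then have j: "1 \<le> j" by simp
  define a :: real where "a = 2^(j-1)"
  have a: "a > 0" unfolding a_def by simp
  have [measurable]: "phi \<psi> 1 \<in> borel_measurable borel" by (rule borel_measurable_continuous_onI[OF phi_cont])
  have "(\<integral>\<^sup>+y. ennreal (norm (FT (phi \<psi> j) y)) \<partial>lborel) = (\<integral>\<^sup>+y. ennreal a * ennreal (norm (FT (phi \<psi> 1) (0 + a * y))) \<partial>lborel)"
    using FT_scale[OF j] a by (simp add: a_def norm_mult ennreal_mult norm_power)
  also have "\<dots> = ennreal a * (\<integral>\<^sup>+y. ennreal (norm (FT (phi \<psi> 1) (0 + a * y))) \<partial>lborel)"
    by (rule nn_integral_cmult) measurable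
  also have "\<dots> = (\<integral>\<^sup>+y. ennreal (norm (FT (phi \<psi> 1) y)) \<partial>lborel)"
  proof -
    have m: "(\<lambda>y. ennreal (norm (FT (phi \<psi> 1) y))) \<in> borel_measurable borel" by measurable
    show ?thesis using nn_integral_real_affine[OF m, where c=a and t=0] a by simp
  qed
  also have "\<dots> \<le> ennreal (2 * pi * c_psi \<psi>)" by (rule nnFT_01) simp
  finally show ?thesis .
qed

lemma kernel_phi:
  "(\<integral>\<^sup>+t. indicator {0..<2*pi} t *
      ennreal (norm (\<Sum>k\<in>{-int (2^(l+1))..int (2^(l+1))}. complex_of_real (phi \<psi> l (of_int k)) * cis (of_int k * (t - y)))) \<partial>lborel)
   \<le> ennreal (2 * pi * c_psi \<psi>)"
  by (rule order.trans[OF kernel1d[OF phi_cont phi_supp] nnFT_bound])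

end

lemma cis_sum: "finite A \<Longrightarrow> cis (sum f A) = (\<Prod>x\<in>A. cis (f x))"
  by (induct rule: finite_induct) (simp_all add: cis_mult[symmetric])

definition kbox :: "('d::finite \<Rightarrow> nat) \<Rightarrow> (int^'d) set" where
  "kbox l = {k. \<forall>j. \<bar>k $ j\<bar> \<le> 2 ^ (l j + 1)}"

definition multi :: "(real \<Rightarrow> real) \<Rightarrow> ('d::finite \<Rightarrow> nat) \<Rightarrow> int^'d \<Rightarrow> real" where
  "multi \<psi> l k = (\<Prod>j\<in>UNIV. phi \<psi> (l j) (real_of_int (k $ j)))"

definition Ker :: "(real \<Rightarrow> real) \<Rightarrow> ('d::finite \<Rightarrow> nat) \<Rightarrow> real^'d \<Rightarrow> complex" where
  "Ker \<psi> l z = (\<Sum>k\<in>kbox l. complex_of_real (multi \<psi> l k) * cis (kdot k z))"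

definition K1 :: "(real \<Rightarrow> real) \<Rightarrow> nat \<Rightarrow> real \<Rightarrow> complex" where
  "K1 \<psi> n s = (\<Sum>k\<in>{-int (2^(n+1))..int (2^(n+1))}. complex_of_real (phi \<psi> n (of_int k)) * cis (of_int k * s))"

lemma mem_sym_iff: "(x::int) \<in> {-B..B} \<longleftrightarrow> \<bar>x\<bar> \<le> B" by auto

lemma bij_kbox: "bij_betw vec_lambda (PiE UNIV (\<lambda>j. {-int (2^(l j+1))..int (2^(l j+1))})) (kbox l)"
proof (rule bij_betwI[where g=vec_nth])
  show "vec_lambda \<in> (PiE UNIV (\<lambda>j. {-int (2^(l j+1))..int (2^(l j+1))})) \<rightarrow> kbox l"
    by (auto simp: kbox_def PiE_def Pi_def mem_sym_iff simp del: atLeastAtMost_iff)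
  show "vec_nth \<in> kbox l \<rightarrow> (PiE UNIV (\<lambda>j. {-int (2^(l j+1))..int (2^(l j+1))}))"
    by (auto simp: kbox_def PiE_def Pi_def mem_sym_iff simp del: atLeastAtMost_iff)
qed auto

lemma finite_kbox: "finite (kbox l)"
  using bij_betw_finite[OF bij_kbox] by (simp add: finite_PiE)

lemma Ker_prod: "Ker \<psi> l z = (\<Prod>j\<in>UNIV. K1 \<psi> (l j) (z $ j))"
proof -
  have "(\<Prod>j\<in>UNIV. K1 \<psi> (l j) (z $ j))
      = (\<Sum>g\<in>PiE UNIV (\<lambda>j. {-int (2^(l j+1))..int (2^(l j+1))}). \<Prod>j\<in>UNIV. complex_of_real (phi \<psi> (l j) (of_int (g j))) * cis (of_int (g j) * z $ j))"
    unfolding K1_def by (rule prod_sum_PiE) auto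
  also have "\<dots> = (\<Sum>k\<in>kbox l. \<Prod>j\<in>UNIV. complex_of_real (phi \<psi> (l j) (of_int (k $ j))) * cis (of_int (k $ j) * z $ j))"
    using sum.reindex_bij_betw[OF bij_kbox, of "\<lambda>k. \<Prod>j\<in>UNIV. complex_of_real (phi \<psi> (l j) (of_int (k $ j))) * cis (of_int (k $ j) * z $ j)"]
    by simp
  also have "\<dots> = Ker \<psi> l z"
    unfolding Ker_def multi_def kdot_def
    by (intro sum.cong refl) (simp add: prod.distrib cis_sum)
  finally show ?thesis ..
qed

lemma indicator_torus:
  fixes x :: "real^'d::finite"
  shows "indicator torus x = (\<Prod>i\<in>UNIV. indicator {0..<2*pi} (x $ i) :: 'a::comm_semiring_1)"
proof (cases "x \<in> torus")
  case True then show ?thesis by (simp add: torus_def)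
next
  case False
  then obtain i where "x $ i \<notin> {0..<2*pi}" by (auto simp: torus_def)
  then have "indicator {0..<2*pi} (x $ i) = (0::'a)" by simp
  then have "(\<Prod>i\<in>UNIV. indicator {0..<2*pi} (x $ i) :: 'a) = 0"
    using prod_zero[of "UNIV::'d set" "\<lambda>i. indicator {0..<2*pi} (x $ i) :: 'a"] by auto
  then show ?thesis using False by simp
qed

lemma torus_sets[measurable]: "torus \<in> sets (borel :: (real^'d::finite) measure)"
proof -
  have "torus = (\<Inter>i. {x::real^'d. 0 \<le> x $ i} \<inter> {x. x $ i < 2*pi})" by (auto simp: torus_def)
  also have "\<dots> \<in> sets borel" by measurable
  finally show ?thesis .
qed

context adm begin

lemma K1_measurable[measurable]: "K1 \<psi> n \<in> borel_measurable borel"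
  unfolding K1_def by measurable

lemma torus_Ker_bound:
  "(\<integral>\<^sup>+x. indicator torus x * ennreal (norm (Ker \<psi> l (x - y))) \<partial>(lborel::(real^'d::finite) measure))
     \<le> ennreal (2 * pi * c_psi \<psi>) ^ CARD('d)"
proof -
  have "(\<integral>\<^sup>+x. indicator torus x * ennreal (norm (Ker \<psi> l (x - y))) \<partial>(lborel::(real^'d) measure))
      = (\<integral>\<^sup>+x. (\<Prod>j\<in>UNIV. indicator {0..<2*pi} (x $ j) * ennreal (norm (K1 \<psi> (l j) (x $ j - y $ j)))) \<partial>lborel)"
    by (intro nn_integral_cong) (simp add: Ker_prod indicator_torus prod.distrib prod_norm prod_ennreal)
  also have "\<dots> = (\<Prod>j\<in>UNIV. \<integral>\<^sup>+t. indicator {0..<2*pi} t * ennreal (norm (K1 \<psi> (l j) (t - y $ j))) \<partial>lborel)"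
    by (rule nn_integral_lborel_vec_prod) measurable
  also have "\<dots> \<le> (\<Prod>j\<in>(UNIV::'d set). ennreal (2 * pi * c_psi \<psi>))"
    by (intro prod_mono_ennreal kernel_phi[unfolded K1_def[symmetric]])
  also have "\<dots> = ennreal (2 * pi * c_psi \<psi>) ^ CARD('d)" by simp
  finally show ?thesis .
qed

end

lemma kdot_measurable[measurable]: "(\<lambda>x. kdot k x) \<in> borel_measurable borel"
  unfolding kdot_def by measurable

lemma Ker_measurable[measurable]: "Ker \<psi> l \<in> borel_measurable borel"
  unfolding Ker_def by measurable

lemma kdot_diff: "kdot k (x - y) = kdot k x - kdot k y"
  unfolding kdot_def by (simp add: algebra_simps sum_subtractf)

lemma Ker_bound: "norm (Ker \<psi> l z) \<le> (\<Sum>k\<in>kbox l. \<bar>multi \<psi> l k\<bar>)"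
  unfolding Ker_def by (rule order.trans[OF norm_sum]) (simp add: norm_mult)

lemma integrable_h_bounded:
  fixes h f :: "'a \<Rightarrow> complex"
  assumes "integrable M h" "f \<in> borel_measurable M" "\<And>y. norm (f y) \<le> B"
  shows "integrable M (\<lambda>y. h y * f y)"
proof (rule Bochner_Integration.integrable_bound[where f="\<lambda>y. B *\<^sub>R h y"])
  show "integrable M (\<lambda>y. B *\<^sub>R h y)" using assms(1) by simp
  show "(\<lambda>y. h y * f y) \<in> borel_measurable M" using assms(1,2) by measurable
  show "AE y in M. norm (h y * f y) \<le> norm (B *\<^sub>R h y)"
  proof (rule AE_I2)
    fix y
    have "norm (h y * f y) \<le> norm (h y) * B" unfolding norm_mult by (intro mult_left_mono assms(3)) auto
    also have "\<dots> \<le> norm (B *\<^sub>R h y)"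
      using mult_right_mono[OF abs_ge_self norm_ge_zero, of B "h y"] by (simp add: mult.commute)
    finally show "norm (h y * f y) \<le> norm (B *\<^sub>R h y)" .
  qed
qed

lemma block_kbox: "block \<psi> g l x = (\<Sum>k\<in>kbox l. complex_of_real (multi \<psi> l k) * g k * cis (kdot k x))"
  unfolding block_def kbox_def multi_def ..

lemma block_meas:
  assumes rep: "meas_repr g \<nu> h"
  shows "block \<psi> g l x = (\<integral>y. h y * Ker \<psi> l (x - y) \<partial>\<nu>)"
proof -
  have sets: "sets \<nu> = sets borel" and hi: "integrable \<nu> h"
    and gk: "\<And>k. g k = (\<integral>y. h y * cis (- kdot k y) \<partial>\<nu>)"
    using rep unfolding meas_repr_def by auto
  have "block \<psi> g l x = (\<Sum>k\<in>kbox l. \<integral>y. h y * (complex_of_real (multi \<psi> l k) * cis (kdot k (x - y))) \<partial>\<nu>)"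
  proof -
    have "complex_of_real (multi \<psi> l k) * g k * cis (kdot k x) = (\<integral>y. h y * (complex_of_real (multi \<psi> l k) * cis (kdot k (x - y))) \<partial>\<nu>)" for k
    proof -
      have "complex_of_real (multi \<psi> l k) * g k * cis (kdot k x)
          = (\<integral>y. h y * cis (- kdot k y) * (complex_of_real (multi \<psi> l k) * cis (kdot k x)) \<partial>\<nu>)"
        unfolding gk integral_mult_left_zero by (simp add: mult_ac)
      also have "\<dots> = (\<integral>y. h y * (complex_of_real (multi \<psi> l k) * cis (kdot k (x - y))) \<partial>\<nu>)"
      proof (intro Bochner_Integration.integral_cong refl)
        fix y
        have c: "cis (kdot k (x - y)) = cis (kdot k x) * cis (- kdot k y)"
          by (subst cis_mult) (simp add: kdot_diff)
        show "h y * cis (- kdot k y) * (complex_of_real (multi \<psi> l k) * cis (kdot k x))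
            = h y * (complex_of_real (multi \<psi> l k) * cis (kdot k (x - y)))"
          unfolding c by (simp only: mult_ac)
      qed
      finally show ?thesis .
    qed
    then show ?thesis unfolding block_kbox by simp
  qed
  also have "\<dots> = (\<integral>y. (\<Sum>k\<in>kbox l. h y * (complex_of_real (multi \<psi> l k) * cis (kdot k (x - y)))) \<partial>\<nu>)"
  proof (rule Bochner_Integration.integral_sum[symmetric])
    fix k
    show "integrable \<nu> (\<lambda>y. h y * (complex_of_real (multi \<psi> l k) * cis (kdot k (x - y))))"
    proof (rule integrable_h_bounded[OF hi])
      show "(\<lambda>y. complex_of_real (multi \<psi> l k) * cis (kdot k (x - y))) \<in> borel_measurable \<nu>"
        unfolding measurable_cong_sets[OF sets refl] by measurable
      show "norm (complex_of_real (multi \<psi> l k) * cis (kdot k (x - y))) \<le> \<bar>multi \<psi> l k\<bar>" for y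
        by (simp add: norm_mult)
    qed
  qed
  also have "\<dots> = (\<integral>y. h y * Ker \<psi> l (x - y) \<partial>\<nu>)"
    unfolding Ker_def by (simp add: sum_distrib_left)
  finally show ?thesis .
qed

lemma block_measurable[measurable]: "block \<psi> g l \<in> borel_measurable borel"
  unfolding block_def by measurable

lemma L1norm_eq:
  fixes f :: "real^'d::finite \<Rightarrow> complex"
  assumes [measurable]: "f \<in> borel_measurable borel"
  shows "L1norm f = 1 / (2*pi)^CARD('d) * enn2real (\<integral>\<^sup>+x. indicator torus x * ennreal (norm (f x)) \<partial>lborel)"
proof -
  have "(\<integral>x\<in>torus. norm (f x) \<partial>lborel) = (\<integral>x. indicator torus x * norm (f x) \<partial>lborel)"
    unfolding set_lebesgue_integral_def by simp
  also have "\<dots> = enn2real (\<integral>\<^sup>+x. ennreal (indicator torus x * norm (f x)) \<partial>lborel)"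
    by (rule integral_eq_nn_integral) auto
  also have "(\<integral>\<^sup>+x. ennreal (indicator torus x * norm (f x)) \<partial>lborel) = (\<integral>\<^sup>+x. indicator torus x * ennreal (norm (f x)) \<partial>lborel)"
    by (intro nn_integral_cong) (auto simp: indicator_def)
  finally show ?thesis unfolding L1norm_def by simp
qed

context adm begin

lemma M_block_bound:
  fixes g :: "'d::finite pdist"
  assumes rep: "meas_repr g \<nu> h"
  shows "L1norm (block \<psi> g l) \<le> c_psi \<psi> ^ CARD('d) * (\<integral>y. norm (h y) \<partial>\<nu>)"
proof -
  have sets: "sets \<nu> = sets borel" and hi: "integrable \<nu> h" and fin: "finite_measure \<nu>"
    using rep unfolding meas_repr_def by auto
  interpret \<nu>: finite_measure \<nu> by (rule fin)
  interpret P: pair_sigma_finite lborel \<nu> ..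
  have hm: "h \<in> borel_measurable borel"
    using borel_measurable_integrable[OF hi] unfolding measurable_cong_sets[OF sets refl] .
  note [measurable] = hm
  define BK where "BK = (\<Sum>k\<in>kbox l. \<bar>multi \<psi> l k\<bar>)"
  define C where "C = ennreal (2 * pi * c_psi \<psi>) ^ CARD('d)"
  have pw: "ennreal (norm (block \<psi> g l x)) \<le> (\<integral>\<^sup>+y. ennreal (norm (h y)) * ennreal (norm (Ker \<psi> l (x - y))) \<partial>\<nu>)" for x :: "real^'d"
  proof -
    have "integrable \<nu> (\<lambda>y. h y * Ker \<psi> l (x - y))"
    proof (rule integrable_h_bounded[OF hi])
      show "(\<lambda>y. Ker \<psi> l (x - y)) \<in> borel_measurable \<nu>"
        unfolding measurable_cong_sets[OF sets refl] by measurable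
      show "norm (Ker \<psi> l (x - y)) \<le> BK" for y unfolding BK_def by (rule Ker_bound)
    qed
    from integral_norm_bound_ennreal[OF this]
    show ?thesis unfolding block_meas[OF rep] by (simp add: norm_mult ennreal_mult)
  qed
  have meas2: "(\<lambda>(x, y). indicator torus x * (ennreal (norm (h y)) * ennreal (norm (Ker \<psi> l (x - y)))))
      \<in> borel_measurable (lborel \<Otimes>\<^sub>M \<nu>)"
  proof -
    have "sets (lborel \<Otimes>\<^sub>M \<nu>) = sets (borel \<Otimes>\<^sub>M (borel :: (real^'d) measure))"
      by (rule sets_pair_measure_cong) (simp_all add: sets)
    then have e: "borel_measurable (lborel \<Otimes>\<^sub>M \<nu>) = borel_measurable (borel \<Otimes>\<^sub>M (borel :: (real^'d) measure))"
      by (rule measurable_cong_sets) simp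
    show ?thesis unfolding e by measurable
  qed
  have "(\<integral>\<^sup>+x. indicator torus x * ennreal (norm (block \<psi> g l x)) \<partial>lborel)
      \<le> (\<integral>\<^sup>+x. indicator torus x * (\<integral>\<^sup>+y. ennreal (norm (h y)) * ennreal (norm (Ker \<psi> l (x - y))) \<partial>\<nu>) \<partial>lborel)"
    by (intro nn_integral_mono mult_left_mono pw) auto
  also have "\<dots> = (\<integral>\<^sup>+x. (\<integral>\<^sup>+y. indicator torus x * (ennreal (norm (h y)) * ennreal (norm (Ker \<psi> l (x - y)))) \<partial>\<nu>) \<partial>lborel)"
    by (intro nn_integral_cong nn_integral_cmult[symmetric]) (unfold measurable_cong_sets[OF sets refl], measurable)
  also have "\<dots> = (\<integral>\<^sup>+y. (\<integral>\<^sup>+x. indicator torus x * (ennreal (norm (h y)) * ennreal (norm (Ker \<psi> l (x - y)))) \<partial>lborel) \<partial>\<nu>)"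
    using P.Fubini'[OF meas2] by simp
  also have "\<dots> = (\<integral>\<^sup>+y. ennreal (norm (h y)) * (\<integral>\<^sup>+x. indicator torus x * ennreal (norm (Ker \<psi> l (x - y))) \<partial>lborel) \<partial>\<nu>)"
  proof (intro nn_integral_cong)
    fix y
    have "(\<integral>\<^sup>+x. indicator torus x * (ennreal (norm (h y)) * ennreal (norm (Ker \<psi> l (x - y)))) \<partial>lborel)
        = (\<integral>\<^sup>+x. ennreal (norm (h y)) * (indicator torus x * ennreal (norm (Ker \<psi> l (x - y)))) \<partial>lborel)"
      by (simp add: mult_ac)
    also have "\<dots> = ennreal (norm (h y)) * (\<integral>\<^sup>+x. indicator torus x * ennreal (norm (Ker \<psi> l (x - y))) \<partial>lborel)"
      by (rule nn_integral_cmult) measurable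
    finally show "(\<integral>\<^sup>+x. indicator torus x * (ennreal (norm (h y)) * ennreal (norm (Ker \<psi> l (x - y)))) \<partial>lborel)
        = ennreal (norm (h y)) * (\<integral>\<^sup>+x. indicator torus x * ennreal (norm (Ker \<psi> l (x - y))) \<partial>lborel)" .
  qed
  also have "\<dots> \<le> (\<integral>\<^sup>+y. ennreal (norm (h y)) * C \<partial>\<nu>)"
    unfolding C_def by (intro nn_integral_mono mult_left_mono torus_Ker_bound) auto
  also have "\<dots> = C * ennreal (\<integral>y. norm (h y) \<partial>\<nu>)"
  proof -
    have "(\<integral>\<^sup>+y. ennreal (norm (h y)) * C \<partial>\<nu>) = (\<integral>\<^sup>+y. ennreal (norm (h y)) \<partial>\<nu>) * C"
      by (rule nn_integral_multc) (unfold measurable_cong_sets[OF sets refl], measurable)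
    also have "(\<integral>\<^sup>+y. ennreal (norm (h y)) \<partial>\<nu>) = ennreal (\<integral>y. norm (h y) \<partial>\<nu>)"
      by (rule nn_integral_eq_integral) (use hi in auto)
    finally show ?thesis by (simp add: mult.commute)
  qed
  also have "\<dots> = ennreal ((2 * pi * c_psi \<psi>) ^ CARD('d) * (\<integral>y. norm (h y) \<partial>\<nu>))"
  proof -
    have n1: "0 \<le> 2*pi*c_psi \<psi>" using c_psi_nonneg by simp
    have n2: "0 \<le> (\<integral>y. norm (h y) \<partial>\<nu>)" by simp
    show ?thesis unfolding C_def ennreal_power[OF n1] ennreal_mult[OF zero_le_power[OF n1] n2] ..
  qed
  finally have "enn2real (\<integral>\<^sup>+x. indicator torus x * ennreal (norm (block \<psi> g l x)) \<partial>lborel)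
      \<le> (2 * pi * c_psi \<psi>) ^ CARD('d) * (\<integral>y. norm (h y) \<partial>\<nu>)"
    by (rule enn2real_leI[rotated]) (use c_psi_nonneg in simp)
  then have "L1norm (block \<psi> g l) \<le> 1 / (2*pi)^CARD('d) * ((2 * pi * c_psi \<psi>) ^ CARD('d) * (\<integral>y. norm (h y) \<partial>\<nu>))"
    unfolding L1norm_eq[OF block_measurable] by (intro mult_left_mono) auto
  also have "\<dots> = c_psi \<psi> ^ CARD('d) * (\<integral>y. norm (h y) \<partial>\<nu>)"
    by (simp add: power_mult_distrib)
  finally show ?thesis .
qed

end

lemma int_cis_period:
  fixes m :: int
  shows "(\<integral>t. indicator {0..<2*pi} t * cis (of_int m * t) \<partial>lborel) = (if m = 0 then complex_of_real (2*pi) else 0)"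
proof -
  have ae: "(\<integral>t. indicator {0..<2*pi} t * cis (of_int m * t) \<partial>lborel) = (\<integral>t. indicator {0..2*pi} t *\<^sub>R cis (of_int m * t) \<partial>lborel)"
    apply (rule integral_cong_AE)
    subgoal by measurable
    subgoal by measurable
    subgoal using AE_lborel_singleton[of "2*pi"] by eventually_elim (auto simp: indicator_def)
    done
  show ?thesis
  proof (cases "m = 0")
    case True
    have "(\<integral>t. indicator {0..2*pi} t *\<^sub>R (1::complex) \<partial>lborel) = (\<lambda>t. complex_of_real t) (2*pi) - (\<lambda>t. complex_of_real t) 0"
    proof (rule integral_FTC_atLeastAtMost)
      fix x :: real
      show "((\<lambda>t. complex_of_real t) has_vector_derivative 1) (at x within {0..2*pi})"
        using has_vector_derivative_of_real[OF DERIV_ident] by simp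
    qed auto
    then show ?thesis unfolding ae using True by simp
  next
    case False
    define c where "c = inverse (\<i> * complex_of_real (of_int m))"
    have nz: "\<i> * complex_of_real (of_int m) \<noteq> 0" using False by simp
    define F where "F t = cis (of_int m * t) * c" for t
    have "(\<integral>t. indicator {0..2*pi} t *\<^sub>R cis (of_int m * t) \<partial>lborel) = F (2*pi) - F 0"
    proof (rule integral_FTC_atLeastAtMost)
      fix x :: real
      have d: "((\<lambda>t. cis (of_int m * t) * c) has_vector_derivative
              (\<i> * complex_of_real (of_int m) * cis (of_int m * x)) * c) (at x within {0..2*pi})"
        by (intro has_vector_derivative_mult_left cis_vd)
      have eq: "(\<i> * complex_of_real (of_int m) * cis (of_int m * x)) * c = cis (of_int m * x)"
      proof -
        have "(\<i> * complex_of_real (of_int m) * cis (of_int m * x)) * c = cis (of_int m * x) * ((\<i> * complex_of_real (of_int m)) * c)"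
          by (simp only: mult_ac)
        also have "\<dots> = cis (of_int m * x)" unfolding c_def right_inverse[OF nz] by simp
        finally show ?thesis .
      qed
      show "(F has_vector_derivative cis (of_int m * x)) (at x within {0..2*pi})"
        using d unfolding eq F_def .
    qed (auto intro!: continuous_intros)
    moreover have "F (2*pi) = F 0"
    proof -
      have e: "of_int m * (2*pi) = (2 * pi) * of_int m" by simp
      have "cis (of_int m * (2*pi)) = 1"
        unfolding e by (simp only: cis.ctr cos_int_2pin sin_int_2pin) (simp add: complex_eq_iff)
      then show ?thesis by (simp add: F_def)
    qed
    ultimately show ?thesis unfolding ae using False by simp
  qed
qed

lemma torus_orth:
  fixes v :: "int^'d::finite"
  shows "(\<integral>x. indicator torus x * cis (kdot v x) \<partial>(lborel::(real^'d) measure)) = (if v = 0 then complex_of_real ((2*pi)^CARD('d)) else 0)"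
proof -
  have "(\<integral>x. indicator torus x * cis (kdot v x) \<partial>(lborel::(real^'d) measure))
      = (\<integral>x. (\<Prod>j\<in>UNIV. indicator {0..<2*pi} (x $ j) * cis (of_int (v $ j) * x $ j)) \<partial>(lborel::(real^'d) measure))"
    by (intro Bochner_Integration.integral_cong refl) (simp add: indicator_torus kdot_def cis_sum prod.distrib)
  also have "\<dots> = (\<Prod>j\<in>UNIV. \<integral>t. indicator {0..<2*pi} t * cis (of_int (v $ j) * t) \<partial>lborel)"
  proof (rule integral_lborel_vec_prod)
    fix j
    have "integrable lborel (\<lambda>t. indicator {0..2*pi} t *\<^sub>R cis (of_int (v $ j) * t))"
      by (rule borel_integrable_compact) (auto intro!: continuous_intros)
    then show "integrable lborel (\<lambda>t. indicator {0..<2*pi} t * cis (of_int (v $ j) * t))"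
      apply (rule integrable_cong_AE_imp)
      subgoal by measurable
      subgoal using AE_lborel_singleton[of "2*pi"] by eventually_elim (auto simp: indicator_def)
      done
  qed
  also have "\<dots> = (\<Prod>j\<in>UNIV. if v $ j = 0 then complex_of_real (2*pi) else 0)"
    by (simp add: int_cis_period)
  also have "\<dots> = (if v = 0 then complex_of_real ((2*pi)^CARD('d)) else 0)"
  proof (cases "v = 0")
    case True then show ?thesis by simp
  next
    case False
    then obtain j where "v $ j \<noteq> 0" by (metis vec_eq_iff zero_index)
    then show ?thesis using False by (intro trans[OF prod_zero]) auto
  qed
  finally show ?thesis .
qed

lemma integrable_torus:
  fixes f :: "real^'d::finite \<Rightarrow> complex"
  assumes "continuous_on UNIV f"
  shows "integrable lborel (\<lambda>x. indicator torus x * f x)"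
proof -
  have "integrable lborel (\<lambda>x. indicator (cbox 0 (\<chi> i. 2*pi)) x *\<^sub>R f x)"
    by (rule borel_integrable_compact) (auto intro: continuous_on_subset[OF assms])
  then have si: "set_integrable lborel (cbox 0 (\<chi> i. 2*pi)) f" unfolding set_integrable_def .
  have sub: "torus \<subseteq> cbox (0::real^'d) (\<chi> i. 2*pi)"
  proof (intro subsetI)
    fix t :: "real^'d" assume "t \<in> torus"
    then have "\<forall>i. 0 \<le> t $ i \<and> t $ i < 2 * pi" by (simp add: torus_def)
    then show "t \<in> cbox 0 (\<chi> i. 2*pi)" unfolding mem_box_cart by (auto intro: less_imp_le)
  qed
  have "set_integrable lborel torus f"
    by (rule set_integrable_subset[OF si _ sub]) simp
  moreover have "(\<lambda>x. indicator torus x *\<^sub>R f x) = (\<lambda>x. indicator torus x * f x)"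
    by (auto simp: fun_eq_iff indicator_def)
  ultimately show ?thesis unfolding set_integrable_def by simp
qed

lemma kdot_diff_left: "kdot (k - k') x = kdot k x - kdot k' x"
  unfolding kdot_def by (simp add: algebra_simps sum_subtractf)

lemma continuous_kdot[continuous_intros]: "continuous_on A (\<lambda>x. kdot k x)"
  unfolding kdot_def by (intro continuous_intros)

lemma L1norm_alt: "L1norm f = 1 / (2*pi)^CARD('d) * (\<integral>x. indicator torus x * norm (f x) \<partial>lborel)"
  for f :: "real^'d::finite \<Rightarrow> complex"
  unfolding L1norm_def set_lebesgue_integral_def by simp

context adm begin

lemma multi_outside: "k \<notin> kbox l \<Longrightarrow> multi \<psi> l k = 0"
proof -
  assume "k \<notin> kbox l"
  then obtain j where j: "\<not> \<bar>k $ j\<bar> \<le> 2 ^ (l j + 1)" by (auto simp: kbox_def)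
  then have "real (2 ^ (l j + 1)) < \<bar>real_of_int (k $ j)\<bar>"
    by (metis of_int_abs of_int_less_iff of_int_numeral of_int_power of_nat_numeral of_nat_power not_le)
  then have "phi \<psi> (l j) (real_of_int (k $ j)) = 0" by (rule phi_supp)
  then show ?thesis unfolding multi_def by (intro prod_zero) auto
qed

lemma coeff_le_L1:
  fixes g :: "'d::finite pdist"
  shows "norm (complex_of_real (multi \<psi> l k) * g k) \<le> L1norm (block \<psi> g l)"
proof -
  define a where "a k' = complex_of_real (multi \<psi> l k') * g k'" for k'
  have cont: "continuous_on UNIV (\<lambda>x. cis (kdot v x))" for v :: "int^'d"
    by (intro continuous_intros)
  have "(\<integral>x. indicator torus x * (block \<psi> g l x * cis (- kdot k x)) \<partial>lborel)
      = (\<integral>x. (\<Sum>k'\<in>kbox l. a k' * (indicator torus x * cis (kdot (k' - k) x))) \<partial>lborel)"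
  proof (intro Bochner_Integration.integral_cong refl)
    fix x :: "real^'d"
    have "cis (kdot (k' - k) x) = cis (kdot k' x) * cis (- kdot k x)" for k'
      by (subst cis_mult) (simp add: kdot_diff_left)
    then show "indicator torus x * (block \<psi> g l x * cis (- kdot k x)) = (\<Sum>k'\<in>kbox l. a k' * (indicator torus x * cis (kdot (k' - k) x)))"
      unfolding block_kbox a_def by (simp add: sum_distrib_left sum_distrib_right mult_ac)
  qed
  also have "\<dots> = (\<Sum>k'\<in>kbox l. a k' * (\<integral>x. indicator torus x * cis (kdot (k' - k) x) \<partial>lborel))"
    by (subst Bochner_Integration.integral_sum) (auto intro!: integrable_torus cont)
  also have "\<dots> = (\<Sum>k'\<in>kbox l. if k' = k then a k' * complex_of_real ((2*pi)^CARD('d)) else 0)"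
    by (intro sum.cong refl) (simp add: torus_orth)
  also have "\<dots> = a k * complex_of_real ((2*pi)^CARD('d))"
    using multi_outside[of k l] by (auto simp: sum.delta finite_kbox a_def)
  finally have eq: "(\<integral>x. indicator torus x * (block \<psi> g l x * cis (- kdot k x)) \<partial>lborel) = a k * complex_of_real ((2*pi)^CARD('d))" .
  have "norm (a k) * (2*pi)^CARD('d) = norm (\<integral>x. indicator torus x * (block \<psi> g l x * cis (- kdot k x)) \<partial>lborel)"
    unfolding eq by (simp add: norm_mult norm_power)
  also have "\<dots> \<le> (\<integral>x. norm (indicator torus x * (block \<psi> g l x * cis (- kdot k x))) \<partial>lborel)"
    by (rule integral_norm_bound)
  also have "\<dots> = (\<integral>x. indicator torus x * norm (block \<psi> g l x) \<partial>lborel)"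
    by (intro Bochner_Integration.integral_cong refl) (simp add: norm_mult indicator_def)
  also have "\<dots> = (2*pi)^CARD('d) * L1norm (block \<psi> g l)"
    unfolding L1norm_alt by simp
  finally show ?thesis unfolding a_def by simp
qed

end

context adm begin

lemma phi_tele: "(\<Sum>l\<le>J. phi \<psi> l \<xi>) = \<psi> (\<xi> / 2^J)"
proof (induction J)
  case 0 then show ?case by (simp add: phi_def)
next
  case (Suc J) then show ?case by (simp add: phi_def)
qed

lemma phi_small_zero:
  assumes "1 \<le> l" "\<bar>\<xi>\<bar> \<le> 2^(l-1)"
  shows "phi \<psi> l \<xi> = 0"
proof -
  have "\<bar>\<xi> / 2^(l-1)\<bar> \<le> 1" using assms by (simp add: abs_divide)
  moreover have "\<bar>\<xi> / 2^l\<bar> \<le> 1"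
  proof -
    have "(2::real)^(l-1) \<le> 2^l" by (intro power_increasing) auto
    then have "\<bar>\<xi>\<bar> \<le> 2^l" using assms(2) by linarith
    then show ?thesis by (simp add: abs_divide)
  qed
  ultimately show ?thesis using assms psi_props(2) by (simp add: phi_def)
qed

lemma phi_nonzero_upper:
  assumes "phi \<psi> l \<xi> \<noteq> 0"
  shows "\<bar>\<xi>\<bar> \<le> 3/2 * 2^l"
proof (rule ccontr)
  assume a: "\<not> \<bar>\<xi>\<bar> \<le> 3/2 * 2^l"
  have z1: "\<psi> (\<xi> / 2^l) = 0"
  proof (rule psi_props(1))
    have "3/2 * 2^l < \<bar>\<xi>\<bar>" using a by simp
    then show "3/2 < \<bar>\<xi> / 2^l\<bar>" by (simp add: abs_divide field_simps)
  qed
  show False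
  proof (cases "l = 0")
    case True then show False using z1 assms by (simp add: phi_def)
  next
    case False
    then obtain m where m: "l = Suc m" by (cases l) auto
    have "\<psi> (\<xi> / 2^(l-1)) = 0"
    proof (rule psi_props(1))
      have "3/2 * 2^l < \<bar>\<xi>\<bar>" using a by simp
      then have "3/2 * 2^m < \<bar>\<xi>\<bar>" unfolding m by simp
      then show "3/2 < \<bar>\<xi> / 2^(l-1)\<bar>" unfolding m by (simp add: abs_divide field_simps)
    qed
    then show False using z1 assms False by (simp add: phi_def)
  qed
qed

definition T :: "real \<Rightarrow> nat set" where "T \<xi> = {l. phi \<psi> l \<xi> \<noteq> 0}"

lemma T_bound: obtains J where "T \<xi> \<subseteq> {..J}" "\<bar>\<xi>\<bar> \<le> 2^J"
proof -
  obtain J where J: "\<bar>\<xi>\<bar> < 2^J" using real_arch_pow[of 2 "\<bar>\<xi>\<bar>"] by auto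
  have "T \<xi> \<subseteq> {..J}"
  proof
    fix l assume l: "l \<in> T \<xi>"
    show "l \<in> {..J}"
    proof (rule ccontr)
      assume "l \<notin> {..J}"
      then have "J \<le> l - 1" "1 \<le> l" by auto
      then have "(2::real)^J \<le> 2^(l-1)" by (intro power_increasing) auto
      then have "\<bar>\<xi>\<bar> \<le> 2^(l-1)" using J by linarith
      then have "phi \<psi> l \<xi> = 0" using \<open>1 \<le> l\<close> by (intro phi_small_zero) auto
      then show False using l by (simp add: T_def)
    qed
  qed
  then show ?thesis using that J by auto
qed

lemma finite_T: "finite (T \<xi>)"
  by (metis T_bound finite_atMost finite_subset)

lemma sum_T: "(\<Sum>l\<in>T \<xi>. phi \<psi> l \<xi>) = 1"
proof -
  obtain J where J: "T \<xi> \<subseteq> {..J}" "\<bar>\<xi>\<bar> \<le> 2^J" by (rule T_bound)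
  have "(\<Sum>l\<in>T \<xi>. phi \<psi> l \<xi>) = (\<Sum>l\<le>J. phi \<psi> l \<xi>)"
    by (rule sum.mono_neutral_left) (use J in \<open>auto simp: T_def\<close>)
  also have "\<dots> = \<psi> (\<xi> / 2^J)" by (rule phi_tele)
  also have "\<dots> = 1" using J by (intro psi_props(2)) (simp add: abs_divide)
  finally show ?thesis .
qed

lemma card_T: "card (T \<xi>) \<le> 2"
proof (cases "T \<xi> = {}")
  case True then show ?thesis by simp
next
  case False
  define m where "m = Min (T \<xi>)"
  have "T \<xi> \<subseteq> {m, Suc m}"
  proof
    fix l assume l: "l \<in> T \<xi>"
    have mT: "m \<in> T \<xi>" unfolding m_def using False finite_T by (rule Min_in[rotated])
    have "m \<le> l" unfolding m_def using finite_T l by simp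
    moreover have "\<not> Suc (Suc m) \<le> l"
    proof
      assume ll: "Suc (Suc m) \<le> l"
      have up: "\<bar>\<xi>\<bar> \<le> 3/2 * 2^m" using mT by (intro phi_nonzero_upper) (simp add: T_def)
      have "\<not> \<bar>\<xi>\<bar> \<le> 2^(l-1)" using l ll phi_small_zero[of l \<xi>] by (auto simp: T_def)
      moreover have "(2::real)^(Suc m) \<le> 2^(l-1)" using ll by (intro power_increasing) auto
      ultimately have "2 * 2^m < \<bar>\<xi>\<bar>" by simp
      then show False using up by simp
    qed
    ultimately show "l \<in> {m, Suc m}" by auto
  qed
  then have "card (T \<xi>) \<le> card {m, Suc m}" by (rule card_mono[rotated]) simp
  then show ?thesis by simp
qed

lemma partition_multi:
  fixes k :: "int^'d::finite"
  obtains L where "finite L" "card L \<le> 2^CARD('d)" "(\<Sum>l\<in>L. multi \<psi> l k) = 1"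
proof -
  define L where "L = PiE (UNIV::'d set) (\<lambda>j. T (real_of_int (k $ j)))"
  have fin: "finite L" unfolding L_def by (intro finite_PiE finite_T) auto
  have "card L = (\<Prod>j\<in>UNIV. card (T (real_of_int (k $ j))))" unfolding L_def by (rule card_PiE) simp
  also have "\<dots> \<le> (\<Prod>j\<in>(UNIV::'d set). 2)" by (intro prod_mono) (auto simp: card_T)
  also have "\<dots> = 2^CARD('d)" by simp
  finally have c: "card L \<le> 2^CARD('d)" .
  have "(\<Sum>l\<in>L. multi \<psi> l k) = (\<Prod>j\<in>UNIV. \<Sum>x\<in>T (real_of_int (k $ j)). phi \<psi> x (real_of_int (k $ j)))"
    unfolding L_def multi_def by (rule prod_sum_PiE[symmetric]) (auto intro: finite_T)
  also have "\<dots> = 1" by (simp add: sum_T)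
  finally show ?thesis using that fin c by blast
qed

lemma L1norm_nonneg: "0 \<le> L1norm f"
  unfolding L1norm_alt by (intro mult_nonneg_nonneg integral_nonneg_AE AE_I2) auto

lemma S_to_B:
  fixes g :: "'d::finite pdist"
  assumes g: "g \<in> fst (Sspace \<psi>)"
  shows "g \<in> fst Bspace \<and> snd Bspace g \<le> 2^CARD('d) * snd (Sspace \<psi>) g"
proof -
  have temp: "tempered g" and bdd: "bdd_above (range (\<lambda>l. L1norm (block \<psi> g l)))"
    using g unfolding Sspace_def by auto
  define s where "s = (SUP l. L1norm (block \<psi> g l))"
  have le_s: "L1norm (block \<psi> g l) \<le> s" for l unfolding s_def by (rule cSUP_upper[OF _ bdd]) simp
  have s0: "0 \<le> s" using le_s[of undefined] L1norm_nonneg[of "block \<psi> g undefined"] by linarith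
  have gk: "norm (g k) \<le> 2^CARD('d) * s" for k
  proof -
    obtain L where L: "finite L" "card L \<le> 2^CARD('d)" "(\<Sum>l\<in>L. multi \<psi> l k) = 1" by (rule partition_multi)
    have "g k = (\<Sum>l\<in>L. complex_of_real (multi \<psi> l k) * g k)"
      using L(3) by (simp add: sum_distrib_right[symmetric] of_real_sum[symmetric])
    then have "norm (g k) \<le> (\<Sum>l\<in>L. norm (complex_of_real (multi \<psi> l k) * g k))"
      by (metis norm_sum)
    also have "\<dots> \<le> (\<Sum>l\<in>L. s)" by (intro sum_mono order.trans[OF coeff_le_L1 le_s])
    also have "\<dots> = real (card L) * s" by simp
    also have "\<dots> \<le> 2^CARD('d) * s" using L(2) s0 by (intro mult_right_mono) (auto simp: of_nat_le_iff[symmetric])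
    finally show ?thesis .
  qed
  have "bdd_above (range (\<lambda>k. norm (g k)))" using gk by (intro bdd_aboveI2) auto
  moreover have "(SUP k. norm (g k)) \<le> 2^CARD('d) * s" by (rule cSUP_least) (auto intro: gk)
  ultimately show ?thesis using temp unfolding Bspace_def Sspace_def s_def by simp
qed

end

lemma le_mult_Inf:
  fixes X :: "real set"
  assumes "\<And>x. x \<in> X \<Longrightarrow> s \<le> a * x" "X \<noteq> {}" "0 \<le> a" "\<And>x. x \<in> X \<Longrightarrow> 0 \<le> x"
  shows "s \<le> a * Inf X"
proof (cases "a = 0")
  case True
  obtain x where "x \<in> X" using assms(2) by blast
  then show ?thesis using assms(1) True by fastforce
next
  case False
  then have a: "a > 0" using assms(3) by simp
  have "s / a \<le> Inf X"
    by (rule cInf_greatest[OF assms(2)]) (use assms(1) a in \<open>auto simp: divide_le_eq mult.commute\<close>)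
  then show ?thesis using a by (simp add: divide_le_eq mult.commute)
qed

lemma F_hom:
  assumes c: "0 \<le> c"
  shows "snd (Fspace w) (\<lambda>k. complex_of_real c * f k) = c * snd (Fspace w) f"
proof -
  have "(\<Sum>\<^sub>\<infinity>k. (norm (complex_of_real c * f k))\<^sup>2 / (w k)\<^sup>2) = (\<Sum>\<^sub>\<infinity>k. c\<^sup>2 * ((norm (f k))\<^sup>2 / (w k)\<^sup>2))"
    by (intro infsum_cong) (simp add: norm_mult power_mult_distrib c)
  also have "\<dots> = c\<^sup>2 * (\<Sum>\<^sub>\<infinity>k. (norm (f k))\<^sup>2 / (w k)\<^sup>2)" by (rule infsum_cmult_right')
  finally show ?thesis unfolding Fspace_def using c by (simp add: real_sqrt_mult)
qed

lemma INF_ereal_cmult: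
  assumes "C > 0"
  shows "(INF A\<in>S. ereal C * f A) = ereal C * (INF A\<in>S. f A)"
proof -
  have "Inf {ereal C * x |x. x \<in> f ` S} = ereal C * Inf {x. x \<in> f ` S}" by (rule ereal_Inf_cmult[OF assms])
  moreover have "{ereal C * x |x. x \<in> f ` S} = (\<lambda>A. ereal C * f A) ` S" by auto
  ultimately show ?thesis by simp
qed

lemma approx_le_gen:
  assumes sub: "\<And>g. g \<in> fst X \<Longrightarrow> g \<in> fst X' \<and> snd X' g \<le> C * snd X g"
    and hom: "\<And>g c. g \<in> fst X \<Longrightarrow> c > 0 \<Longrightarrow> (\<lambda>k. complex_of_real c * g k) \<in> fst X \<and> snd X (\<lambda>k. complex_of_real c * g k) \<le> c * snd X g"
    and C: "C > 0"
  shows "approx_num n X (Fspace w) \<le> ereal C * approx_num n X' (Fspace w)"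
proof -
  define Y where "Y = Fspace w"
  define SX where "SX = {A. clinear_on (fst X) A \<and> A ` fst X \<subseteq> fst Y \<and> rank_lt (fst X) A n}"
  define SX' where "SX' = {A. clinear_on (fst X') A \<and> A ` fst X' \<subseteq> fst Y \<and> rank_lt (fst X') A n}"
  have XX': "fst X \<subseteq> fst X'" using sub by auto
  have main: "approx_num n X Y \<le> ereal C * incl_diff_norm X' Y A" if A: "A \<in> SX'" for A
  proof -
    have lin: "clinear_on (fst X') A" and AY: "A ` fst X' \<subseteq> fst Y" and rk: "rank_lt (fst X') A n"
      using A unfolding SX'_def by auto
    have l1: "clinear_on (fst X) A"
      unfolding clinear_on_def
    proof (intro conjI ballI allI)
      fix f g assume "f \<in> fst X" "g \<in> fst X"
      then have "f \<in> fst X'" "g \<in> fst X'" using XX' by auto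
      then show "A (\<lambda>k. f k + g k) = (\<lambda>k. A f k + A g k)" using lin unfolding clinear_on_def by blast
    next
      fix f and c :: complex assume "f \<in> fst X"
      then have "f \<in> fst X'" using XX' by auto
      then show "A (\<lambda>k. c * f k) = (\<lambda>k. c * A f k)" using lin unfolding clinear_on_def by blast
    qed
    have l2: "A ` fst X \<subseteq> fst Y" using AY XX' by blast
    have l3: "rank_lt (fst X) A n"
    proof -
      obtain B where "finite B" "card B < n" "A ` fst X' \<subseteq> cspan_fun B" using rk unfolding rank_lt_def by blast
      moreover have "A ` fst X \<subseteq> A ` fst X'" using XX' by (rule image_mono)
      ultimately show ?thesis unfolding rank_lt_def by blast
    qed
    have "A \<in> SX" unfolding SX_def using l1 l2 l3 by simp
    then have "approx_num n X Y \<le> incl_diff_norm X Y A"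
      unfolding approx_num_def SX_def by (rule INF_lower)
    also have "\<dots> \<le> ereal C * incl_diff_norm X' Y A"
      unfolding incl_diff_norm_def
    proof (rule SUP_least)
      fix g assume g: "g \<in> {g \<in> fst X. snd X g \<le> 1}"
      define g' where "g' k = complex_of_real (1/C) * g k" for k
      have g'X: "g' \<in> fst X" and ng': "snd X g' \<le> 1/C * snd X g"
        using hom[of g "1/C"] g C unfolding g'_def by auto
      have g'X': "g' \<in> fst X'" and ng'': "snd X' g' \<le> C * snd X g'" using sub[OF g'X] by auto
      have "snd X' g' \<le> 1"
      proof -
        have "C * snd X g' \<le> C * (1/C * snd X g)" using ng' C by (intro mult_left_mono) auto
        also have "\<dots> \<le> 1" using g C by simp
        finally show ?thesis using ng'' by simp
      qed
      then have up: "ereal (snd Y (\<lambda>k. g' k - A g' k)) \<le> (SUP g\<in>{g \<in> fst X'. snd X' g \<le> 1}. ereal (snd Y (\<lambda>k. g k - A g k)))"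
        using g'X' by (intro SUP_upper) auto
      have gg: "g = (\<lambda>k. complex_of_real C * g' k)" using C by (simp add: g'_def fun_eq_iff)
      have "A (\<lambda>k. complex_of_real C * g' k) = (\<lambda>k. complex_of_real C * A g' k)"
        using lin g'X' unfolding clinear_on_def by blast
      then have Ag: "A g = (\<lambda>k. complex_of_real C * A g' k)" using gg by simp
      have "(\<lambda>k. g k - A g k) = (\<lambda>k. complex_of_real C * (g' k - A g' k))"
        by (subst Ag, subst (1) gg) (simp add: algebra_simps)
      then have "snd Y (\<lambda>k. g k - A g k) = C * snd Y (\<lambda>k. g' k - A g' k)"
        unfolding Y_def using C by (simp add: F_hom)
      then have "ereal (snd Y (\<lambda>k. g k - A g k)) = ereal C * ereal (snd Y (\<lambda>k. g' k - A g' k))" by simp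
      also have "\<dots> \<le> ereal C * (SUP g\<in>{g \<in> fst X'. snd X' g \<le> 1}. ereal (snd Y (\<lambda>k. g k - A g k)))"
        using up C by (intro ereal_mult_left_mono) auto
      finally show "ereal (snd Y (\<lambda>k. g k - A g k)) \<le> ereal C * (SUP g\<in>{g \<in> fst X'. snd X' g \<le> 1}. ereal (snd Y (\<lambda>k. g k - A g k)))" .
    qed
    finally show ?thesis .
  qed
  have "approx_num n X Y \<le> (INF A\<in>SX'. ereal C * incl_diff_norm X' Y A)"
    by (rule INF_greatest) (rule main)
  also have "\<dots> = ereal C * approx_num n X' Y"
    unfolding approx_num_def SX'_def by (rule INF_ereal_cmult[OF C])
  finally show ?thesis unfolding Y_def .
qed

lemma block_scale: "block \<psi> (\<lambda>k. complex_of_real c * g k) l x = complex_of_real c * block \<psi> g l x"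
  unfolding block_def by (simp add: sum_distrib_left mult_ac)

lemma L1norm_scale:
  fixes f :: "real^'d::finite \<Rightarrow> complex"
  assumes "0 \<le> c"
  shows "L1norm (\<lambda>x. complex_of_real c * f x) = c * L1norm f"
  unfolding L1norm_alt using assms by (simp add: norm_mult mult_ac)

lemma S_hom:
  fixes g :: "'d::finite pdist"
  assumes g: "g \<in> fst (Sspace \<psi>)" and c: "c > 0"
  shows "(\<lambda>k. complex_of_real c * g k) \<in> fst (Sspace \<psi>) \<and> snd (Sspace \<psi>) (\<lambda>k. complex_of_real c * g k) \<le> c * snd (Sspace \<psi>) g"
proof -
  have temp: "tempered g" and bdd: "bdd_above (range (\<lambda>l. L1norm (block \<psi> g l)))"
    using g unfolding Sspace_def by auto
  obtain C N where CN: "\<And>k. norm (g k) \<le> C * (1 + (\<Sum>i\<in>UNIV. real_of_int \<bar>k $ i\<bar>)) ^ N"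
    using temp unfolding tempered_def by blast
  have "tempered (\<lambda>k. complex_of_real c * g k)"
    unfolding tempered_def
  proof (intro exI allI)
    fix k
    have "norm (complex_of_real c * g k) = c * norm (g k)" using c by (simp add: norm_mult)
    also have "\<dots> \<le> c * (C * (1 + (\<Sum>i\<in>UNIV. real_of_int \<bar>k $ i\<bar>)) ^ N)" using c CN by (intro mult_left_mono) auto
    finally show "norm (complex_of_real c * g k) \<le> (c * C) * (1 + (\<Sum>i\<in>UNIV. real_of_int \<bar>k $ i\<bar>)) ^ N"
      by (simp add: mult.assoc)
  qed
  moreover have eq: "L1norm (block \<psi> (\<lambda>k. complex_of_real c * g k) l) = c * L1norm (block \<psi> g l)" for l
    unfolding block_scale using c by (simp add: L1norm_scale)
  moreover have "bdd_above (range (\<lambda>l. c * L1norm (block \<psi> g l)))"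
  proof -
    obtain M where "\<And>l. L1norm (block \<psi> g l) \<le> M" using bdd by (auto simp: bdd_above_def)
    then show ?thesis using c by (intro bdd_aboveI2[where M="c * M"] mult_left_mono) auto
  qed
  moreover have "(SUP l. c * L1norm (block \<psi> g l)) \<le> c * (SUP l. L1norm (block \<psi> g l))"
    by (rule cSUP_least) (use c in \<open>auto intro!: mult_left_mono cSUP_upper bdd\<close>)
  ultimately show ?thesis unfolding Sspace_def by simp
qed

lemma M_hom:
  fixes g :: "'d::finite pdist"
  assumes g: "g \<in> fst Mspace" and c: "c > 0"
  shows "(\<lambda>k. complex_of_real c * g k) \<in> fst Mspace \<and> snd Mspace (\<lambda>k. complex_of_real c * g k) \<le> c * snd Mspace g"
proof -
  have rep_scale: "meas_repr (\<lambda>k. complex_of_real c * g k) \<nu> (\<lambda>x. complex_of_real c * h x)" if r: "meas_repr g \<nu> h" for \<nu> h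
    using r unfolding meas_repr_def by (auto simp: mult.assoc)
  obtain \<nu> h where r: "meas_repr g \<nu> h" using g unfolding Mspace_def by auto
  have mem: "(\<lambda>k. complex_of_real c * g k) \<in> fst Mspace" using rep_scale[OF r] unfolding Mspace_def by auto
  define X where "X = {(\<integral>x. norm (h x) \<partial>\<nu>) | \<nu> h. meas_repr g \<nu> h}"
  define Y where "Y = {(\<integral>x. norm (h x) \<partial>\<nu>) | \<nu> h. meas_repr (\<lambda>k. complex_of_real c * g k) \<nu> h}"
  have Ybdd: "bdd_below Y" unfolding Y_def by (intro bdd_belowI[where m=0]) auto
  have "Inf Y \<le> c * Inf X"
  proof (rule le_mult_Inf)
    fix x assume "x \<in> X"
    then obtain \<nu> h where x: "x = (\<integral>x. norm (h x) \<partial>\<nu>)" and r: "meas_repr g \<nu> h" unfolding X_def by auto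
    have "(\<integral>y. norm (complex_of_real c * h y) \<partial>\<nu>) \<in> Y"
      unfolding Y_def mem_Collect_eq
      by (rule exI[where x=\<nu>], rule exI[where x="\<lambda>x. complex_of_real c * h x"]) (use rep_scale[OF r] in simp)
    then have "Inf Y \<le> (\<integral>y. norm (complex_of_real c * h y) \<partial>\<nu>)" by (rule cInf_lower[OF _ Ybdd])
    also have "\<dots> = c * x" unfolding x using c by (simp add: norm_mult)
    finally show "Inf Y \<le> c * x" .
  next
    show "X \<noteq> {}" using r unfolding X_def by blast
  qed (use c in \<open>auto simp: X_def\<close>)
  then show ?thesis using mem unfolding Mspace_def X_def Y_def by simp
qed

context adm begin

lemma M_to_S:
  fixes g :: "'d::finite pdist"
  assumes g: "g \<in> fst Mspace"
  shows "g \<in> fst (Sspace \<psi>) \<and> snd (Sspace \<psi>) g \<le> c_psi \<psi> ^ CARD('d) * snd Mspace g"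
proof -
  obtain \<nu> h where r: "meas_repr g \<nu> h" using g unfolding Mspace_def by auto
  have gk: "g k = (\<integral>y. h y * cis (- kdot k y) \<partial>\<nu>)" for k using r unfolding meas_repr_def by auto
  have "norm (g k) \<le> (\<integral>y. norm (h y) \<partial>\<nu>)" for k
  proof -
    have "norm (g k) \<le> (\<integral>y. norm (h y * cis (- kdot k y)) \<partial>\<nu>)" unfolding gk by (rule integral_norm_bound)
    then show ?thesis by (simp add: norm_mult)
  qed
  then have temp: "tempered g" unfolding tempered_def by (intro exI[where x="\<integral>y. norm (h y) \<partial>\<nu>"] exI[where x=0]) simp
  have bdd: "bdd_above (range (\<lambda>l. L1norm (block \<psi> g l)))"
    using M_block_bound[OF r] by (intro bdd_aboveI2) auto
  define X where "X = {(\<integral>x. norm (h x) \<partial>\<nu>) | \<nu> h. meas_repr g \<nu> h}"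
  have "(SUP l. L1norm (block \<psi> g l)) \<le> c_psi \<psi> ^ CARD('d) * Inf X"
  proof (rule le_mult_Inf)
    fix x assume "x \<in> X"
    then obtain \<nu> h where x: "x = (\<integral>x. norm (h x) \<partial>\<nu>)" and r: "meas_repr g \<nu> h" unfolding X_def by auto
    show "(SUP l. L1norm (block \<psi> g l)) \<le> c_psi \<psi> ^ CARD('d) * x"
      unfolding x by (rule cSUP_least) (auto intro: M_block_bound[OF r])
  next
    show "X \<noteq> {}" using r unfolding X_def by blast
  qed (auto simp: X_def c_psi_nonneg)
  then show ?thesis using temp bdd unfolding Sspace_def Mspace_def X_def by simp
qed

end

lemma zero_in_S: "(\<lambda>k. 0) \<in> fst (Sspace \<psi>) \<and> snd (Sspace \<psi>) (\<lambda>k. 0 :: complex) \<le> (1::real)"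
proof -
  have b: "block \<psi> (\<lambda>k::int^'d::finite. 0) l = (\<lambda>x. 0)" for l by (simp add: block_def fun_eq_iff)
  have L: "L1norm (\<lambda>x::real^'d. 0::complex) = 0" by (simp add: L1norm_def)
  have "tempered (\<lambda>k::int^'d. 0::complex)" unfolding tempered_def by (intro exI[where x=0]) simp
  then show ?thesis unfolding Sspace_def by (simp add: b L)
qed

lemma approx_S_nonneg: "0 \<le> approx_num n (Sspace \<psi>) (Fspace w :: 'd::finite dspace)"
  unfolding approx_num_def
proof (rule INF_greatest)
  fix A assume "A \<in> {A. clinear_on (fst (Sspace \<psi>)) A \<and> A ` fst (Sspace \<psi>) \<subseteq> fst (Fspace w) \<and> rank_lt (fst (Sspace \<psi>)) A n}"
  have "ereal 0 \<le> ereal (snd (Fspace w) (\<lambda>k. (\<lambda>k::int^'d. 0::complex) k - A (\<lambda>k. 0) k))"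
    by (simp add: Fspace_def infsum_nonneg)
  also have "\<dots> \<le> incl_diff_norm (Sspace \<psi>) (Fspace w) A"
    unfolding incl_diff_norm_def using zero_in_S[of \<psi>] by (intro SUP_upper) auto
  finally show "0 \<le> incl_diff_norm (Sspace \<psi>) (Fspace w) A" by (simp add: zero_ereal_def)
qed

theorem lemma11:
  fixes w :: "int ^ 'd::finite \<Rightarrow> real" and \<psi> :: "real \<Rightarrow> real" and n :: nat
  assumes "\<And>k. w k > 0"
    and "(\<lambda>k. 1 / (w k)\<^sup>2) summable_on UNIV"
    and "admissible \<psi>"
    and "n \<ge> 1"
  shows "ereal (1 / c_psi \<psi> ^ CARD('d)) * approx_num n Mspace (Fspace w)
           \<le> approx_num n (Sspace \<psi>) (Fspace w)
         \<and> approx_num n (Sspace \<psi>) (Fspace w)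
           \<le> ereal (2 ^ CARD('d)) * approx_num n Bspace (Fspace w)"
proof
  interpret adm \<psi> by (rule adm.intro) fact
  show "ereal (1 / c_psi \<psi> ^ CARD('d)) * approx_num n Mspace (Fspace w) \<le> approx_num n (Sspace \<psi>) (Fspace w)"
  proof (cases "c_psi \<psi> = 0")
    case True
    have "0 < CARD('d)" by (rule zero_less_card_finite)
    then have "c_psi \<psi> ^ CARD('d) = 0" unfolding True by (rule zero_power)
    then have z: "ereal (1 / c_psi \<psi> ^ CARD('d)) = 0" by (simp add: zero_ereal_def)
    show ?thesis unfolding z using approx_S_nonneg[of n \<psi> w] by simp
  next
    case False
    then have cpos: "c_psi \<psi> ^ CARD('d) > 0" using c_psi_nonneg[of \<psi>] by simp
    have "approx_num n Mspace (Fspace w) \<le> ereal (c_psi \<psi> ^ CARD('d)) * approx_num n (Sspace \<psi>) (Fspace w)"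
      by (rule approx_le_gen[OF M_to_S M_hom cpos])
    then have "ereal (1 / c_psi \<psi> ^ CARD('d)) * approx_num n Mspace (Fspace w)
        \<le> ereal (1 / c_psi \<psi> ^ CARD('d)) * (ereal (c_psi \<psi> ^ CARD('d)) * approx_num n (Sspace \<psi>) (Fspace w))"
      using cpos by (intro ereal_mult_left_mono) auto
    also have "\<dots> = approx_num n (Sspace \<psi>) (Fspace w)"
    proof -
      have "ereal (1 / c_psi \<psi> ^ CARD('d)) * ereal (c_psi \<psi> ^ CARD('d)) = ereal 1"
        unfolding times_ereal.simps using cpos False by simp
      then show ?thesis by (simp add: mult.assoc[symmetric] one_ereal_def[symmetric])
    qed
    finally show ?thesis .
  qed
  show "approx_num n (Sspace \<psi>) (Fspace w) \<le> ereal (2 ^ CARD('d)) * approx_num n Bspace (Fspace w)"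
    by (rule approx_le_gen[OF S_to_B S_hom]) auto
qed

end
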